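(* Let $H=\sum_Z H_Z$ be a Hamiltonian on a lattice of $V$ sites with range $R$ and interaction strength $J$, with nondegenerate ground state $\Psi_0$ of energy $E_0=0$, and suppose its second smallest eigenvalue is at least $\lambda_{min}>0$. Then $H$ has an $(R,2\sqrt{JV/\lambda_{min}})$ unique ground state.
   Context: Range $R$ and interaction strength $J$: each $H_Z$ is Hermitian and supported on a set $Z$ of diameter at most $R$, and $\sup_i\sum_{Z\ni i}\Vert H_Z\Vert\le J$. $P_0=|\Psi_0\rangle\langle\Psi_0|$. $\Vert\cdot\Vert_1$ is the trace norm, $\overline A$ the complement of $A$, ${\rm Tr}_{\overline A}$ the partial trace over $\overline A$. Definition: $H$ has an $(l,\tau)$ unique ground state if for all $\epsilon\ge0$ and every density matrix $\rho$ such that $\Vert{\rm Tr}_{\overline A}(\rho-P_0)\Vert_1\le\epsilon$ for all sets $A$ with ${\rm diam}(A)\le l$, one has $\Vert\rho-P_0\Vert_1\le\tau\sqrt\epsilon$. *)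

theory Defs
  imports "HOL-Analysis.Analysis"
begin

text \<open>Finite-dimensional matrices and vectors over complex numbers, indexed by a finite
  carrier set S of basis labels. A matrix is a function 'i => 'i => complex, only its
  entries on S x S are relevant.\<close>

definition mmult :: "'i set \<Rightarrow> ('i \<Rightarrow> 'i \<Rightarrow> complex) \<Rightarrow> ('i \<Rightarrow> 'i \<Rightarrow> complex) \<Rightarrow> ('i \<Rightarrow> 'i \<Rightarrow> complex)" where
  "mmult S X Y = (\<lambda>a b. \<Sum>c\<in>S. X a c * Y c b)"

definition adj :: "('i \<Rightarrow> 'i \<Rightarrow> complex) \<Rightarrow> ('i \<Rightarrow> 'i \<Rightarrow> complex)" where
  "adj X = (\<lambda>a b. cnj (X b a))"

definition mtrace :: "'i set \<Rightarrow> ('i \<Rightarrow> 'i \<Rightarrow> complex) \<Rightarrow> complex" where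
  "mtrace S X = (\<Sum>a\<in>S. X a a)"

definition hermitian_on :: "'i set \<Rightarrow> ('i \<Rightarrow> 'i \<Rightarrow> complex) \<Rightarrow> bool" where
  "hermitian_on S X \<longleftrightarrow> (\<forall>a\<in>S. \<forall>b\<in>S. X a b = cnj (X b a))"

definition psd_on :: "'i set \<Rightarrow> ('i \<Rightarrow> 'i \<Rightarrow> complex) \<Rightarrow> bool" where
  "psd_on S X \<longleftrightarrow> hermitian_on S X \<and>
     (\<forall>v::'i \<Rightarrow> complex. 0 \<le> Re (\<Sum>a\<in>S. \<Sum>b\<in>S. cnj (v a) * X a b * v b))"

definition psd_sqrt :: "'i set \<Rightarrow> ('i \<Rightarrow> 'i \<Rightarrow> complex) \<Rightarrow> ('i \<Rightarrow> 'i \<Rightarrow> complex)" where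
  "psd_sqrt S Y = (THE R. psd_on S R \<and> (\<forall>a b. (a \<notin> S \<or> b \<notin> S) \<longrightarrow> R a b = 0)
                         \<and> (\<forall>a\<in>S. \<forall>b\<in>S. mmult S R R a b = Y a b))"

definition trace_norm :: "'i set \<Rightarrow> ('i \<Rightarrow> 'i \<Rightarrow> complex) \<Rightarrow> real" where
  "trace_norm S X = Re (mtrace S (psd_sqrt S (mmult S (adj X) X)))"

definition vnorm :: "'i set \<Rightarrow> ('i \<Rightarrow> complex) \<Rightarrow> real" where
  "vnorm S v = sqrt (\<Sum>a\<in>S. (cmod (v a))\<^sup>2)"

definition mapply :: "'i set \<Rightarrow> ('i \<Rightarrow> 'i \<Rightarrow> complex) \<Rightarrow> ('i \<Rightarrow> complex) \<Rightarrow> ('i \<Rightarrow> complex)" where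
  "mapply S X v = (\<lambda>a. \<Sum>b\<in>S. X a b * v b)"

definition opnorm :: "'i set \<Rightarrow> ('i \<Rightarrow> 'i \<Rightarrow> complex) \<Rightarrow> real" where
  "opnorm S X = Sup {vnorm S (mapply S X v) | v. vnorm S v \<le> 1}"

text \<open>Spin systems: sites of finite type 's (V = CARD('s)), local basis of finite type 'q.
  Global basis = configurations 's => 'q. Basis of the subsystem on sites A:
  configurations on A, i.e. PiE A (\<lambda>_. UNIV).\<close>

definition configs :: "'s set \<Rightarrow> ('s \<Rightarrow> 'q) set" where
  "configs A = PiE A (\<lambda>_. UNIV)"

definition merge :: "'s set \<Rightarrow> ('s \<Rightarrow> 'q) \<Rightarrow> ('s \<Rightarrow> 'q) \<Rightarrow> ('s \<Rightarrow> 'q)" where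
  "merge A \<sigma> \<omega> = (\<lambda>i. if i \<in> A then \<sigma> i else \<omega> i)"

definition ptrace :: "'s set \<Rightarrow> (('s \<Rightarrow> 'q) \<Rightarrow> ('s \<Rightarrow> 'q) \<Rightarrow> complex) \<Rightarrow> (('s \<Rightarrow> 'q) \<Rightarrow> ('s \<Rightarrow> 'q) \<Rightarrow> complex)" where
  "ptrace A X = (\<lambda>\<sigma> \<tau>. \<Sum>\<omega>\<in>configs (- A). X (merge A \<sigma> \<omega>) (merge A \<tau> \<omega>))"

text \<open>M is supported on Z: M = m \<otimes> Id on the complement of Z.\<close>
definition supported_on :: "'s set \<Rightarrow> (('s \<Rightarrow> 'q) \<Rightarrow> ('s \<Rightarrow> 'q) \<Rightarrow> complex) \<Rightarrow> bool" where
  "supported_on Z M \<longleftrightarrow> (\<exists>m. \<forall>\<sigma> \<tau>. M \<sigma> \<tau> =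
      (if (\<forall>i. i \<notin> Z \<longrightarrow> \<sigma> i = \<tau> i) then m (restrict \<sigma> Z) (restrict \<tau> Z) else 0))"

definition hamiltonian :: "('s::finite set \<Rightarrow> (('s \<Rightarrow> 'q) \<Rightarrow> ('s \<Rightarrow> 'q) \<Rightarrow> complex)) \<Rightarrow> (('s \<Rightarrow> 'q) \<Rightarrow> ('s \<Rightarrow> 'q) \<Rightarrow> complex)" where
  "hamiltonian h = (\<lambda>\<sigma> \<tau>. \<Sum>Z\<in>UNIV. h Z \<sigma> \<tau>)"

definition projector :: "('i \<Rightarrow> complex) \<Rightarrow> ('i \<Rightarrow> 'i \<Rightarrow> complex)" where
  "projector \<psi> = (\<lambda>a b. \<psi> a * cnj (\<psi> b))"

definition density_matrix :: "(('s::finite \<Rightarrow> 'q::finite) \<Rightarrow> ('s \<Rightarrow> 'q) \<Rightarrow> complex) \<Rightarrow> bool" where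
  "density_matrix \<rho> \<longleftrightarrow> psd_on UNIV \<rho> \<and> mtrace UNIV \<rho> = 1"

definition unique_gs :: "real \<Rightarrow> real \<Rightarrow> (('s::{finite,metric_space} \<Rightarrow> 'q::finite) \<Rightarrow> complex) \<Rightarrow> bool" where
  "unique_gs l t \<Psi>0 \<longleftrightarrow>
     (\<forall>\<epsilon>::real. \<forall>\<rho>. \<epsilon> \<ge> 0 \<and> density_matrix \<rho> \<and>
        (\<forall>A::'s set. diameter A \<le> l \<longrightarrow>
            trace_norm (configs A) (ptrace A (\<lambda>a b. \<rho> a b - projector \<Psi>0 a b)) \<le> \<epsilon>)
        \<longrightarrow> trace_norm UNIV (\<lambda>a b. \<rho> a b - projector \<Psi>0 a b) \<le> t * sqrt \<epsilon>)"

end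

theory Submission
  imports Defs
begin
definition ip :: "'i set \<Rightarrow> ('i \<Rightarrow> complex) \<Rightarrow> ('i \<Rightarrow> complex) \<Rightarrow> complex" where
  "ip S u v = (\<Sum>a\<in>S. cnj (u a) * v a)"

lemma ip_add_right: "ip S u (\<lambda>a. v a + w a) = ip S u v + ip S u w"
  by (simp add: ip_def distrib_left sum.distrib)
lemma ip_diff_right: "ip S u (\<lambda>a. v a - w a) = ip S u v - ip S u w"
  by (simp add: ip_def right_diff_distrib sum_subtractf)
lemma ip_scale_right: "ip S u (\<lambda>a. c * v a) = c * ip S u v"
  by (simp add: ip_def sum_distrib_left mult_ac)
lemma ip_add_left: "ip S (\<lambda>a. u a + w a) v = ip S u v + ip S w v"
  by (simp add: ip_def distrib_right sum.distrib)
lemma ip_diff_left: "ip S (\<lambda>a. u a - w a) v = ip S u v - ip S w v"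
  by (simp add: ip_def left_diff_distrib sum_subtractf)
lemma ip_scale_left: "ip S (\<lambda>a. c * u a) v = cnj c * ip S u v"
  by (simp add: ip_def sum_distrib_left mult_ac)
lemma ip_cnj: "cnj (ip S u v) = ip S v u"
  by (simp add: ip_def mult.commute)
lemma ip_cong: "(\<And>a. a \<in> S \<Longrightarrow> u a = u' a) \<Longrightarrow> (\<And>a. a \<in> S \<Longrightarrow> v a = v' a) \<Longrightarrow> ip S u v = ip S u' v'"
  by (simp add: ip_def)
lemma ip_self: "ip S v v = of_real (\<Sum>a\<in>S. (cmod (v a))\<^sup>2)"
proof -
  have "\<And>a. cnj (v a) * v a = of_real ((cmod (v a))\<^sup>2)"
    by (metis complex_norm_square mult.commute)
  then show ?thesis by (simp add: ip_def)
qed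
lemma ip_self_real: "Re (ip S v v) = (\<Sum>a\<in>S. (cmod (v a))\<^sup>2)" "Im (ip S v v) = 0"
  by (simp_all add: ip_self)
lemma ip_self_ge0: "Re (ip S v v) \<ge> 0"
  by (simp add: ip_self_real sum_nonneg)
lemma ip_self_zero:
  assumes "finite S" "Re (ip S v v) = 0" "a \<in> S" shows "v a = 0"
proof -
  have "(\<Sum>a\<in>S. (cmod (v a))\<^sup>2) = 0" by (metis assms(2) ip_self_real(1))
  then have "(cmod (v a))\<^sup>2 = 0" using assms sum_nonneg_eq_0_iff[of S "\<lambda>a. (cmod (v a))\<^sup>2"] by auto
  then show ?thesis by simp
qed
lemma ip_self_eq: "ip S v v = of_real (Re (ip S v v))"
  by (simp add: ip_self)

lemma mapply_add: "mapply S X (\<lambda>a. v a + w a) = (\<lambda>a. mapply S X v a + mapply S X w a)"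
  by (simp add: mapply_def distrib_left sum.distrib)
lemma mapply_scale: "mapply S X (\<lambda>a. c * v a) = (\<lambda>a. c * mapply S X v a)"
  by (simp add: mapply_def sum_distrib_left mult_ac)

lemma herm_ip:
  assumes "hermitian_on S X"
  shows "ip S u (mapply S X v) = ip S (mapply S X u) v"
proof -
  have "ip S u (mapply S X v) = (\<Sum>a\<in>S. \<Sum>b\<in>S. cnj (u a) * X a b * v b)"
    by (simp add: ip_def mapply_def sum_distrib_left mult_ac)
  also have "\<dots> = (\<Sum>b\<in>S. \<Sum>a\<in>S. cnj (u a) * X a b * v b)" by (rule sum.swap)
  also have "\<dots> = ip S (mapply S X u) v"
    unfolding ip_def mapply_def
    apply (simp add: sum_distrib_right)
    apply (rule sum.cong, simp)+
    using assms unfolding hermitian_on_def by (metis complex_cnj_cnj mult.commute)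
  finally show ?thesis .
qed

lemma herm_ip_self_real:
  assumes "hermitian_on S X" shows "Im (ip S v (mapply S X v)) = 0"
proof -
  have "cnj (ip S v (mapply S X v)) = ip S v (mapply S X v)"
    using herm_ip[OF assms] ip_cnj by metis
  then show ?thesis by (metis Reals_cnj_iff complex_is_Real_iff)
qed

lemma orth_card_bound:
  fixes E :: "('i::finite \<Rightarrow> complex) set"
  assumes orth: "\<forall>e\<in>E. \<forall>f\<in>E. ip S e f = (if e = f then 1 else 0)"
  shows "finite E \<and> card E \<le> DIM(complex^'i)"
proof -
  define V where "V = (vec_lambda ` E :: (complex^'i) set)"
  have inj: "inj_on vec_lambda E"
    by (rule inj_onI) (metis vec_lambda_beta ext)
  have nth: "\<And>e. vec_nth (vec_lambda e) = e" by (rule ext) simp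
  have "independent V"
  proof
    assume "dependent V"
    then obtain T u v where T: "finite T" "T \<subseteq> V" "(\<Sum>w\<in>T. u w *\<^sub>R w) = 0"
      and v: "v \<in> T" "u v \<noteq> 0"
      unfolding real_vector.dependent_explicit by blast
    obtain e0 where e0: "e0 \<in> E" "v = vec_lambda e0" using T v V_def by blast
    have comp: "\<And>a. (\<Sum>w\<in>T. of_real (u w) * (w $ a)) = 0"
    proof -
      fix a
      have "(\<Sum>w\<in>T. u w *\<^sub>R (w $ a)) = 0" using arg_cong[OF T(3), of "\<lambda>x. x$a"] by simp
      then show "(\<Sum>w\<in>T. of_real (u w) * (w $ a)) = 0" by (simp add: scaleR_conv_of_real)
    qed
    have "0 = (\<Sum>a\<in>S. cnj (e0 a) * (\<Sum>w\<in>T. of_real (u w) * (w $ a)))"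
      using comp by simp
    also have "\<dots> = (\<Sum>w\<in>T. of_real (u w) * ip S e0 (vec_nth w))"
      unfolding ip_def by (simp add: sum_distrib_left sum_distrib_right mult_ac sum.swap[of _ S])
    also have "\<dots> = (\<Sum>w\<in>T. if w = v then of_real (u w) else 0)"
    proof (rule sum.cong[OF refl])
      fix w assume "w \<in> T"
      then obtain f where f: "f \<in> E" "w = vec_lambda f" using T V_def by blast
      have "(w = v) = (f = e0)" using f e0 inj by (metis nth)
      then show "of_real (u w) * ip S e0 (vec_nth w) = (if w = v then of_real (u w) else 0)"
        using orth f e0 by (auto simp: nth)
    qed
    also have "\<dots> = of_real (u v)" using T v by (simp add: sum.delta')
    finally show False using v by simp
  qed
  then have "finite V \<and> card V \<le> DIM(complex^'i)" by (rule independent_bound)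
  then show ?thesis using inj V_def finite_image_iff card_image by metis
qed

lemma exists_max_vec:
  fixes S :: "'i::finite set" and E :: "('i \<Rightarrow> complex) set"
  defines "K \<equiv> {v. (\<forall>a. a \<notin> S \<longrightarrow> v a = 0) \<and> ip S v v = 1 \<and> (\<forall>e\<in>E. ip S e v = 0)}"
  assumes ne: "K \<noteq> {}"
  shows "\<exists>v\<in>K. \<forall>w\<in>K. Re (ip S w (mapply S X w)) \<le> Re (ip S v (mapply S X v))"
proof -
  define K' where "K' = {x::complex^'i. (\<forall>a. (if a \<in> S then 0 else x$a) = 0) \<and> (\<Sum>a\<in>S. cnj (x$a) * x$a) = 1 \<and> (\<forall>e\<in>E. (\<Sum>a\<in>S. cnj (e a) * x$a) = 0)}"
  define f where "f x = Re (\<Sum>a\<in>S. cnj (x$a) * (\<Sum>b\<in>S. X a b * x$b))" for x :: "complex^'i"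
  have memK: "vec_lambda v \<in> K' \<longleftrightarrow> v \<in> K" for v
    unfolding K'_def K_def ip_def by (auto split: if_splits)
  have memK': "x \<in> K' \<Longrightarrow> vec_nth x \<in> K" for x
    using memK[of "vec_nth x"] by simp
  have fK: "f (vec_lambda v) = Re (ip S v (mapply S X v))" for v
    unfolding f_def ip_def mapply_def by simp
  have "closed K'"
  proof -
    have c1: "closed {x::complex^'i. \<forall>a. (if a \<in> S then 0 else x$a) = 0}"
    proof (intro closed_Collect_all closed_Collect_eq)
      fix a
      show "continuous_on UNIV (\<lambda>x::complex^'i. if a \<in> S then 0 else x$a)"
        by (cases "a \<in> S") (simp_all add: continuous_on_const continuous_on_component[OF continuous_on_id])
    qed (rule continuous_on_const)
    have c2: "closed {x::complex^'i. (\<Sum>a\<in>S. cnj (x$a) * x$a) = 1}"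
      by (intro closed_Collect_eq continuous_intros)
    have c3: "closed {x::complex^'i. \<forall>e\<in>E. (\<Sum>a\<in>S. cnj (e a) * x$a) = 0}"
    proof -
      have "{x::complex^'i. \<forall>e\<in>E. (\<Sum>a\<in>S. cnj (e a) * x$a) = 0} = (\<Inter>e\<in>E. {x. (\<Sum>a\<in>S. cnj (e a) * x$a) = 0})"
        by auto
      moreover have "closed (\<Inter>e\<in>E. {x::complex^'i. (\<Sum>a\<in>S. cnj (e a) * x$a) = 0})"
        by (intro closed_INT ballI closed_Collect_eq continuous_intros)
      ultimately show ?thesis by simp
    qed
    have "K' = {x::complex^'i. \<forall>a. (if a \<in> S then 0 else x$a) = 0} \<inter> {x. (\<Sum>a\<in>S. cnj (x$a) * x$a) = 1} \<inter> {x. \<forall>e\<in>E. (\<Sum>a\<in>S. cnj (e a) * x$a) = 0}"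
      unfolding K'_def by auto
    then show ?thesis using c1 c2 c3 by (simp add: closed_Int)
  qed
  moreover have "bounded K'"
  proof -
    have "norm x \<le> 1" if "x \<in> K'" for x
    proof -
      have "ip S (vec_nth x) (vec_nth x) = 1" using that unfolding K'_def ip_def by simp
      then have s1: "(\<Sum>a\<in>S. (cmod (x$a))\<^sup>2) = 1" using ip_self_real(1)[of S "vec_nth x"] by simp
      have "(\<Sum>a\<in>UNIV. (norm (x$a))\<^sup>2) = (\<Sum>a\<in>S. (cmod (x$a))\<^sup>2)"
        using that unfolding K'_def
        by (intro sum.mono_neutral_right) (auto split: if_splits)
      then show ?thesis unfolding norm_vec_def L2_set_def using s1 by simp
    qed
    then show ?thesis unfolding bounded_iff by blast
  qed
  ultimately have "compact K'" using compact_eq_bounded_closed by blast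
  moreover have "K' \<noteq> {}" using ne memK by blast
  moreover have "continuous_on K' f" unfolding f_def by (intro continuous_intros)
  ultimately obtain x where x: "x \<in> K'" "\<forall>y\<in>K'. f y \<le> f x"
    using continuous_attains_sup by blast
  show ?thesis
  proof (intro bexI ballI)
    show "vec_nth x \<in> K" using memK' x(1) .
    fix w assume "w \<in> K"
    then have "f (vec_lambda w) \<le> f x" using x memK by blast
    then show "Re (ip S w (mapply S X w)) \<le> Re (ip S (vec_nth x) (mapply S X (vec_nth x)))"
      using fK[of w] fK[of "vec_nth x"] by simp
  qed
qed

lemma max_is_eigen:
  fixes S :: "'i::finite set" and E :: "('i \<Rightarrow> complex) set"
  defines "K \<equiv> {v. (\<forall>a. a \<notin> S \<longrightarrow> v a = 0) \<and> ip S v v = 1 \<and> (\<forall>e\<in>E. ip S e v = 0)}"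
  assumes herm: "hermitian_on S X"
    and E_eig: "\<And>e. e \<in> E \<Longrightarrow> \<exists>l. \<forall>a\<in>S. mapply S X e a = l * e a"
    and vK: "v \<in> K"
    and vmax: "\<And>w. w \<in> K \<Longrightarrow> Re (ip S w (mapply S X w)) \<le> Re (ip S v (mapply S X v))"
  shows "\<forall>a\<in>S. mapply S X v a = of_real (Re (ip S v (mapply S X v))) * v a"
proof (rule ccontr)
  define Xv where "Xv = mapply S X v"
  define \<mu> where "\<mu> = Re (ip S v Xv)"
  define w where "w = (\<lambda>a. if a \<in> S then Xv a - of_real \<mu> * v a else 0)"
  define Xw where "Xw = mapply S X w"
  define nw where "nw = Re (ip S w w)"
  define qw where "qw = Re (ip S w Xw)"
  assume "\<not> (\<forall>a\<in>S. mapply S X v a = of_real (Re (ip S v (mapply S X v))) * v a)"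
  then obtain a0 where a0: "a0 \<in> S" "w a0 \<noteq> 0" unfolding w_def Xv_def \<mu>_def by auto
  have nw_pos: "nw > 0"
    using ip_self_ge0[of S w] ip_self_zero[of S w a0] a0 unfolding nw_def by force
  have v1: "ip S v v = 1" and vS: "\<And>a. a \<notin> S \<Longrightarrow> v a = 0" and vE: "\<And>e. e \<in> E \<Longrightarrow> ip S e v = 0"
    using vK unfolding K_def by auto
  have wS: "\<And>a. a \<notin> S \<Longrightarrow> w a = 0" unfolding w_def by simp
  have ipvXv: "ip S v Xv = of_real \<mu>"
    using herm_ip_self_real[OF herm, of v] unfolding \<mu>_def Xv_def by (simp add: complex_eq_iff)
  have f1: "ip S v w = 0"
  proof -
    have "ip S v w = ip S v (\<lambda>a. Xv a - of_real \<mu> * v a)" by (rule ip_cong) (auto simp: w_def)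
    also have "\<dots> = 0" by (simp add: ip_diff_right ip_scale_right v1 ipvXv)
    finally show ?thesis .
  qed
  have f2: "ip S w v = 0" using f1 ip_cnj by (metis complex_cnj_zero)
  have f3: "ip S e w = 0" if eE: "e \<in> E" for e
  proof -
    obtain l where l: "\<forall>a\<in>S. mapply S X e a = l * e a" using E_eig eE by blast
    have "ip S e Xv = ip S (mapply S X e) v" unfolding Xv_def by (rule herm_ip[OF herm])
    also have "\<dots> = ip S (\<lambda>a. l * e a) v" by (rule ip_cong) (use l in auto)
    also have "\<dots> = 0" using vE[OF eE] by (simp add: ip_scale_left)
    finally have "ip S e Xv = 0" .
    have "ip S e w = ip S e (\<lambda>a. Xv a - of_real \<mu> * v a)" by (rule ip_cong) (auto simp: w_def)
    also have "\<dots> = 0" using \<open>ip S e Xv = 0\<close> vE[OF eE] by (simp add: ip_diff_right ip_scale_right)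
    finally show ?thesis .
  qed
  have ww: "ip S w w = of_real nw" unfolding nw_def by (rule ip_self_eq)
  have f4: "ip S w Xv = of_real nw"
  proof -
    have "ip S w Xv = ip S w (\<lambda>a. w a + of_real \<mu> * v a)" by (rule ip_cong) (auto simp: w_def)
    also have "\<dots> = of_real nw" by (simp add: ip_add_right ip_scale_right f2 ww)
    finally show ?thesis .
  qed
  have f5: "ip S v Xw = of_real nw"
    using herm_ip[OF herm, of v w] f4 ip_cnj[of S w Xv] unfolding Xw_def Xv_def by simp
  have wXw: "Im (ip S w Xw) = 0" using herm_ip_self_real[OF herm] unfolding Xw_def by simp
  define t where "t = nw / (\<bar>\<mu> * nw - qw\<bar> + 1)"
  have t_pos: "t > 0" unfolding t_def using nw_pos by simp
  define y where "y = (\<lambda>a. v a + of_real t * w a)"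
  define D where "D = 1 + t\<^sup>2 * nw"
  have D_pos: "D > 0" unfolding D_def using nw_pos by (simp add: add_pos_nonneg)
  have yy: "ip S y y = of_real D"
    unfolding y_def D_def
    by (simp add: ip_add_left ip_add_right ip_scale_left ip_scale_right v1 f1 f2 ww power2_eq_square)
  have Xy: "mapply S X y = (\<lambda>a. Xv a + of_real t * Xw a)"
    unfolding y_def Xv_def Xw_def by (simp add: mapply_add mapply_scale)
  have qy: "Re (ip S y (mapply S X y)) = \<mu> + 2 * t * nw + t\<^sup>2 * qw"
  proof -
    have "ip S y (mapply S X y) = ip S v Xv + of_real t * ip S v Xw + of_real t * ip S w Xv + of_real t * of_real t * ip S w Xw"
      unfolding Xy unfolding y_def
      by (simp add: ip_add_left ip_add_right ip_scale_left ip_scale_right algebra_simps)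
    then show ?thesis using ipvXv f4 f5 unfolding qw_def by (simp add: power2_eq_square)
  qed
  define c where "c = 1 / sqrt D"
  define z where "z = (\<lambda>a. of_real c * y a)"
  have "z \<in> K"
  proof -
    have "ip S z z = of_real (c * c * D)"
      unfolding z_def by (simp add: ip_scale_left ip_scale_right yy)
    also have "c * c * D = 1" unfolding c_def using D_pos
      by (simp add: real_sqrt_mult[symmetric] field_simps)
    finally have "ip S z z = 1" by simp
    moreover have "\<forall>a. a \<notin> S \<longrightarrow> z a = 0" unfolding z_def y_def using vS wS by simp
    moreover have "\<forall>e\<in>E. ip S e z = 0"
      unfolding z_def y_def using vE f3 by (simp add: ip_scale_right ip_add_right)
    ultimately show ?thesis unfolding K_def by simp
  qed
  then have "Re (ip S z (mapply S X z)) \<le> \<mu>" using vmax unfolding \<mu>_def Xv_def by blast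
  moreover have "Re (ip S z (mapply S X z)) = c * c * (\<mu> + 2 * t * nw + t\<^sup>2 * qw)"
  proof -
    have "mapply S X z = (\<lambda>a. of_real c * mapply S X y a)" unfolding z_def by (simp add: mapply_scale)
    then have "ip S z (mapply S X z) = of_real (c * c) * ip S y (mapply S X y)"
      unfolding z_def by (simp add: ip_scale_left ip_scale_right)
    then show ?thesis using qy by simp
  qed
  ultimately have "c * c * (\<mu> + 2 * t * nw + t\<^sup>2 * qw) \<le> \<mu>" by simp
  moreover have "c * c = 1 / D" unfolding c_def using D_pos
    by (simp add: real_sqrt_mult[symmetric] field_simps)
  ultimately have "\<mu> + 2 * t * nw + t\<^sup>2 * qw \<le> \<mu> * D" using D_pos by (simp add: field_simps)
  then have "2 * t * nw \<le> t\<^sup>2 * (\<mu> * nw - qw)" unfolding D_def by (simp add: algebra_simps)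
  also have "\<dots> \<le> t\<^sup>2 * \<bar>\<mu> * nw - qw\<bar>" by (intro mult_left_mono) auto
  finally have "2 * nw \<le> t * \<bar>\<mu> * nw - qw\<bar>" using t_pos by (simp add: power2_eq_square)
  also have "t * \<bar>\<mu> * nw - qw\<bar> < nw"
    unfolding t_def using nw_pos by (simp add: field_simps)
  finally show False using nw_pos by simp
qed

definition eigfam :: "'i set \<Rightarrow> ('i \<Rightarrow> 'i \<Rightarrow> complex) \<Rightarrow> ('i \<Rightarrow> complex) set \<Rightarrow> (('i \<Rightarrow> complex) \<Rightarrow> real) \<Rightarrow> bool" where
  "eigfam S X E ev \<longleftrightarrow> finite E \<and> (\<forall>e\<in>E. \<forall>a. a \<notin> S \<longrightarrow> e a = 0)
     \<and> (\<forall>e\<in>E. \<forall>f\<in>E. ip S e f = (if e = f then 1 else 0))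
     \<and> (\<forall>e\<in>E. \<forall>a\<in>S. mapply S X e a = of_real (ev e) * e a)"

lemma ip_sum_right: "ip S u (\<lambda>a. \<Sum>e\<in>E. c e * g e a) = (\<Sum>e\<in>E. c e * ip S u (g e))"
  unfolding ip_def by (simp add: sum_distrib_left sum.swap[of _ S] mult_ac)

lemma eigfam_extend:
  fixes S :: "'i::finite set"
  assumes herm: "hermitian_on S X" and ef: "eigfam S X E ev"
    and ne: "{v. (\<forall>a. a \<notin> S \<longrightarrow> v a = 0) \<and> ip S v v = 1 \<and> (\<forall>e\<in>E. ip S e v = 0)} \<noteq> {}"
  shows "\<exists>E' ev'. eigfam S X E' ev' \<and> card E' = Suc (card E)"
proof -
  let ?K = "{v. (\<forall>a. a \<notin> S \<longrightarrow> v a = 0) \<and> ip S v v = 1 \<and> (\<forall>e\<in>E. ip S e v = 0)}"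
  obtain v where v: "v \<in> ?K" and vmax: "\<forall>w\<in>?K. Re (ip S w (mapply S X w)) \<le> Re (ip S v (mapply S X v))"
    using exists_max_vec[OF ne] by blast
  define \<mu> where "\<mu> = Re (ip S v (mapply S X v))"
  have eig: "\<forall>a\<in>S. mapply S X v a = of_real \<mu> * v a"
    unfolding \<mu>_def
  proof (rule max_is_eigen[OF herm _ v])
    fix e assume "e \<in> E" then show "\<exists>l. \<forall>a\<in>S. mapply S X e a = l * e a"
      using ef unfolding eigfam_def by blast
  qed (use vmax in blast)
  have vE: "v \<notin> E"
  proof
    assume "v \<in> E" then have "ip S v v = 0" using v by blast
    then show False using v by simp
  qed
  have fin: "finite E" using ef unfolding eigfam_def by blast
  define ev' where "ev' = ev(v := \<mu>)"
  have "eigfam S X (insert v E) ev'"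
    unfolding eigfam_def
  proof (intro conjI)
    show "finite (insert v E)" using fin by simp
    show "\<forall>e\<in>insert v E. \<forall>a. a \<notin> S \<longrightarrow> e a = 0" using v ef unfolding eigfam_def by auto
    show "\<forall>e\<in>insert v E. \<forall>f\<in>insert v E. ip S e f = (if e = f then 1 else 0)"
    proof (intro ballI)
      fix e f assume e: "e \<in> insert v E" and f: "f \<in> insert v E"
      have vv: "ip S v v = 1" using v by blast
      have ve: "ip S g v = 0" "ip S v g = 0" if "g \<in> E" for g
      proof -
        show g1: "ip S g v = 0" using v that by blast
        show "ip S v g = 0" using g1 ip_cnj[of S g v] by simp
      qed
      show "ip S e f = (if e = f then 1 else 0)"
        using e f vv ve vE ef unfolding eigfam_def by auto
    qed
    show "\<forall>e\<in>insert v E. \<forall>a\<in>S. mapply S X e a = complex_of_real (ev' e) * e a"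
      using eig ef vE unfolding eigfam_def ev'_def by auto
  qed
  moreover have "card (insert v E) = Suc (card E)" using fin vE by simp
  ultimately show ?thesis by blast
qed

theorem spectral:
  fixes S :: "'i::finite set"
  assumes herm: "hermitian_on S X"
  shows "\<exists>E ev. eigfam S X E ev
    \<and> (\<forall>a\<in>S. \<forall>b\<in>S. (\<Sum>e\<in>E. e a * cnj (e b)) = (if a = b then 1 else 0))
    \<and> (\<forall>a\<in>S. \<forall>b\<in>S. X a b = (\<Sum>e\<in>E. of_real (ev e) * e a * cnj (e b)))"
proof -
  define C where "C = {card E | E ev. eigfam S X E ev}"
  have Cb: "C \<subseteq> {..DIM(complex^'i)}"
    unfolding C_def eigfam_def using orth_card_bound by fastforce
  have "0 \<in> C" unfolding C_def eigfam_def by force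
  have finC: "finite C" using Cb finite_subset by blast
  define m where "m = Max C"
  have "m \<in> C" unfolding m_def using finC \<open>0 \<in> C\<close> Max_in by blast
  then obtain E ev where ef: "eigfam S X E ev" and cm: "card E = m" unfolding C_def by blast
  have Kempty: "{v. (\<forall>a. a \<notin> S \<longrightarrow> v a = 0) \<and> ip S v v = 1 \<and> (\<forall>e\<in>E. ip S e v = 0)} = {}"
  proof (rule ccontr)
    assume "\<not> ?thesis"
    then obtain E' ev' where "eigfam S X E' ev'" "card E' = Suc m" using eigfam_extend[OF herm ef] cm by blast
    then have "Suc m \<in> C" unfolding C_def by force
    then have "Suc m \<le> m" unfolding m_def using finC Max_ge by blast
    then show False by simp
  qed
  have fin: "finite E" and eS: "\<And>e a. e \<in> E \<Longrightarrow> a \<notin> S \<Longrightarrow> e a = 0"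
    and orth: "\<And>e f. e \<in> E \<Longrightarrow> f \<in> E \<Longrightarrow> ip S e f = (if e = f then 1 else 0)"
    and eig: "\<And>e a. e \<in> E \<Longrightarrow> a \<in> S \<Longrightarrow> mapply S X e a = of_real (ev e) * e a"
    using ef unfolding eigfam_def by auto
  have compl: "(\<Sum>e\<in>E. e a * cnj (e b)) = (if a = b then 1 else 0)" if a: "a \<in> S" and b: "b \<in> S" for a b
  proof -
    define \<delta> where "\<delta> = (\<lambda>c. if c = b then 1 else (0::complex))"
    have ipd: "ip S e \<delta> = cnj (e b)" for e
      unfolding ip_def \<delta>_def using b by (simp add: if_distrib sum.delta' cong: if_cong)
    define v where "v = (\<lambda>c. if c \<in> S then \<delta> c - (\<Sum>e\<in>E. ip S e \<delta> * e c) else 0)"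
    have vS: "\<forall>c. c \<notin> S \<longrightarrow> v c = 0" unfolding v_def by simp
    have vE: "ip S f v = 0" if f: "f \<in> E" for f
    proof -
      have "ip S f v = ip S f (\<lambda>c. \<delta> c - (\<Sum>e\<in>E. ip S e \<delta> * e c))"
        by (rule ip_cong) (auto simp: v_def)
      also have "\<dots> = ip S f \<delta> - (\<Sum>e\<in>E. ip S e \<delta> * ip S f e)"
        by (simp add: ip_diff_right ip_sum_right)
      also have "(\<Sum>e\<in>E. ip S e \<delta> * ip S f e) = ip S f \<delta>"
        using f fin by (simp add: orth if_distrib sum.delta cong: if_cong)
      finally show ?thesis by simp
    qed
    have "Re (ip S v v) = 0"
    proof (rule ccontr)
      assume nz: "Re (ip S v v) \<noteq> 0"
      then have pos: "Re (ip S v v) > 0" using ip_self_ge0[of S v] by simp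
      define r where "r = 1 / sqrt (Re (ip S v v))"
      define v' where "v' = (\<lambda>c. of_real r * v c)"
      have "ip S v' v' = cnj (of_real r) * (of_real r * ip S v v)"
        unfolding v'_def ip_scale_left ip_scale_right by (rule refl)
      also have "\<dots> = 1"
      proof -
        have rr: "r * r * Re (ip S v v) = 1" using pos by (simp add: r_def field_simps)
        show ?thesis by (subst ip_self_eq) (metis rr of_real_1 of_real_mult complex_cnj_complex_of_real mult.assoc)
      qed
      finally have "ip S v' v' = 1" .
      moreover have "\<forall>c. c \<notin> S \<longrightarrow> v' c = 0" unfolding v'_def using vS by simp
      moreover have "\<forall>e\<in>E. ip S e v' = 0" unfolding v'_def using vE by (simp add: ip_scale_right)
      ultimately show False using Kempty by blast
    qed
    then have "v a = 0" using ip_self_zero[of S v a] a by simp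
    then have "\<delta> a = (\<Sum>e\<in>E. ip S e \<delta> * e a)" unfolding v_def using a by simp
    then have "\<delta> a = (\<Sum>e\<in>E. e a * cnj (e b))" by (simp only: ipd mult.commute)
    then show ?thesis unfolding \<delta>_def by simp
  qed
  have decomp: "X a b = (\<Sum>e\<in>E. of_real (ev e) * e a * cnj (e b))" if a: "a \<in> S" and b: "b \<in> S" for a b
  proof -
    have "X a b = (\<Sum>c\<in>S. X a c * (if c = b then 1 else 0))" using b by (simp add: if_distrib sum.delta' cong: if_cong)
    also have "\<dots> = (\<Sum>c\<in>S. X a c * (\<Sum>e\<in>E. e c * cnj (e b)))"
      by (rule sum.cong) (use compl b in auto)
    also have "\<dots> = (\<Sum>e\<in>E. mapply S X e a * cnj (e b))"
      unfolding mapply_def by (simp add: sum_distrib_left sum_distrib_right sum.swap[of _ S] mult_ac)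
    also have "\<dots> = (\<Sum>e\<in>E. of_real (ev e) * e a * cnj (e b))"
      by (rule sum.cong) (use eig a in auto)
    finally show ?thesis .
  qed
  show ?thesis using ef compl decomp by blast
qed

definition onb :: "'i set \<Rightarrow> ('i \<Rightarrow> complex) set \<Rightarrow> bool" where
  "onb S E \<longleftrightarrow> finite E \<and> (\<forall>e\<in>E. \<forall>a. a \<notin> S \<longrightarrow> e a = 0)
     \<and> (\<forall>e\<in>E. \<forall>f\<in>E. ip S e f = (if e = f then 1 else 0))
     \<and> (\<forall>a\<in>S. \<forall>b\<in>S. (\<Sum>e\<in>E. e a * cnj (e b)) = (if a = b then 1 else 0))"

definition spec :: "'i set \<Rightarrow> ('i \<Rightarrow> 'i \<Rightarrow> complex) \<Rightarrow> ('i \<Rightarrow> complex) set \<Rightarrow> (('i \<Rightarrow> complex) \<Rightarrow> real) \<Rightarrow> bool" where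
  "spec S X E ev \<longleftrightarrow> onb S E \<and> (\<forall>a\<in>S. \<forall>b\<in>S. X a b = (\<Sum>e\<in>E. of_real (ev e) * e a * cnj (e b)))"

lemma spectral_spec:
  fixes S :: "'i::finite set"
  assumes "hermitian_on S X" shows "\<exists>E ev. spec S X E ev"
  using spectral[OF assms] unfolding spec_def onb_def eigfam_def by blast

lemma onb_orth: "onb S E \<Longrightarrow> e \<in> E \<Longrightarrow> f \<in> E \<Longrightarrow> ip S e f = (if e = f then 1 else 0)"
  unfolding onb_def by blast
lemma onb_fin: "onb S E \<Longrightarrow> finite E" unfolding onb_def by blast
lemma onb_supp: "onb S E \<Longrightarrow> e \<in> E \<Longrightarrow> a \<notin> S \<Longrightarrow> e a = 0" unfolding onb_def by blast
lemma onb_compl: "onb S E \<Longrightarrow> a \<in> S \<Longrightarrow> b \<in> S \<Longrightarrow> (\<Sum>e\<in>E. e a * cnj (e b)) = (if a = b then 1 else 0)"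
  unfolding onb_def by blast

lemma prod_decomp:
  assumes E: "onb S E" and a: "a \<in> S" and b: "b \<in> S"
  shows "(\<Sum>c\<in>S. (\<Sum>e\<in>E. m e * e a * cnj (e c)) * (\<Sum>f\<in>E. n f * f c * cnj (f b)))
       = (\<Sum>e\<in>E. m e * n e * e a * cnj (e b))"
proof -
  have "(\<Sum>c\<in>S. (\<Sum>e\<in>E. m e * e a * cnj (e c)) * (\<Sum>f\<in>E. n f * f c * cnj (f b)))
      = (\<Sum>e\<in>E. \<Sum>f\<in>E. m e * n f * e a * cnj (f b) * ip S e f)"
    unfolding ip_def by (simp add: sum_distrib_left sum_distrib_right sum.swap[of _ S] mult_ac)
  also have "\<dots> = (\<Sum>e\<in>E. m e * n e * e a * cnj (e b))"
    using onb_fin[OF E] by (simp add: onb_orth[OF E] if_distrib sum.delta cong: if_cong)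
  finally show ?thesis .
qed

lemma mapply_decomp:
  assumes E: "onb S E" and a: "a \<in> S" and M: "\<forall>a\<in>S. \<forall>b\<in>S. M a b = (\<Sum>e\<in>E. m e * e a * cnj (e b))"
  shows "mapply S M v a = (\<Sum>e\<in>E. m e * e a * ip S e v)"
proof -
  have "mapply S M v a = (\<Sum>b\<in>S. (\<Sum>e\<in>E. m e * e a * cnj (e b)) * v b)"
    unfolding mapply_def using M a by simp
  also have "\<dots> = (\<Sum>e\<in>E. m e * e a * ip S e v)"
    unfolding ip_def by (simp add: sum_distrib_left sum_distrib_right sum.swap[of _ S] mult_ac)
  finally show ?thesis .
qed

lemma mapply_decomp_basis:
  assumes E: "onb S E" and a: "a \<in> S" and M: "\<forall>a\<in>S. \<forall>b\<in>S. M a b = (\<Sum>e\<in>E. m e * e a * cnj (e b))"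
    and g: "g \<in> E"
  shows "mapply S M g a = m g * g a"
  using mapply_decomp[OF E a M, of g] onb_fin[OF E] g
  by (simp add: onb_orth[OF E] if_distrib sum.delta' cong: if_cong)

lemma psd_ip: "psd_on S R \<Longrightarrow> Re (ip S v (mapply S R v)) \<ge> 0"
  unfolding psd_on_def ip_def mapply_def by (simp add: sum_distrib_left mult_ac)

lemma sqrt_char:
  fixes S :: "'i::finite set"
  assumes E: "onb S E" and ypos: "\<And>e. e \<in> E \<Longrightarrow> y e \<ge> 0"
    and Y: "\<forall>a\<in>S. \<forall>b\<in>S. Y a b = (\<Sum>e\<in>E. of_real (y e) * e a * cnj (e b))"
  shows "psd_sqrt S Y = (\<lambda>a b. if a \<in> S \<and> b \<in> S then (\<Sum>e\<in>E. of_real (sqrt (y e)) * e a * cnj (e b)) else 0)"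
proof -
  define R0 where "R0 = (\<lambda>a b. if a \<in> S \<and> b \<in> S then (\<Sum>e\<in>E. of_real (sqrt (y e)) * e a * cnj (e b)) else 0)"
  have fin: "finite E" using onb_fin[OF E] .
  have R0S: "\<forall>a\<in>S. \<forall>b\<in>S. R0 a b = (\<Sum>e\<in>E. of_real (sqrt (y e)) * e a * cnj (e b))"
    unfolding R0_def by simp
  have P0: "psd_on S R0 \<and> (\<forall>a b. (a \<notin> S \<or> b \<notin> S) \<longrightarrow> R0 a b = 0) \<and> (\<forall>a\<in>S. \<forall>b\<in>S. mmult S R0 R0 a b = Y a b)"
  proof (intro conjI)
    show "psd_on S R0"
      unfolding psd_on_def
    proof (intro conjI allI)
      show "hermitian_on S R0" unfolding hermitian_on_def R0_def by (simp add: mult_ac)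
      fix v :: "'i \<Rightarrow> complex"
      have "(\<Sum>a\<in>S. \<Sum>b\<in>S. cnj (v a) * R0 a b * v b) = ip S v (mapply S R0 v)"
        unfolding ip_def mapply_def by (simp add: sum_distrib_left mult_ac)
      also have "\<dots> = (\<Sum>a\<in>S. cnj (v a) * (\<Sum>e\<in>E. of_real (sqrt (y e)) * e a * ip S e v))"
        unfolding ip_def[of S v] using mapply_decomp[OF E _ R0S] by simp
      also have "\<dots> = (\<Sum>e\<in>E. of_real (sqrt (y e)) * ip S e v * ip S v e)"
        unfolding ip_def[of S v] by (simp add: sum_distrib_left sum.swap[of _ S] mult_ac)
      also have "\<dots> = (\<Sum>e\<in>E. of_real (sqrt (y e)) * (cnj (ip S e v) * ip S e v))"
        by (simp add: ip_cnj[of S e v for e, symmetric] mult_ac)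
      finally have eq: "(\<Sum>a\<in>S. \<Sum>b\<in>S. cnj (v a) * R0 a b * v b) = (\<Sum>e\<in>E. of_real (sqrt (y e)) * (ip S e v * cnj (ip S e v)))"
        by (simp add: mult.commute)
      show "0 \<le> Re (\<Sum>a\<in>S. \<Sum>b\<in>S. cnj (v a) * R0 a b * v b)"
        unfolding eq Re_sum by (intro sum_nonneg) (simp add: ypos complex_mult_cnj del: of_real_add)
    qed
    show "\<forall>a b. (a \<notin> S \<or> b \<notin> S) \<longrightarrow> R0 a b = 0" unfolding R0_def by auto
    show "\<forall>a\<in>S. \<forall>b\<in>S. mmult S R0 R0 a b = Y a b"
    proof (intro ballI)
      fix a b assume a: "a \<in> S" and b: "b \<in> S"
      have "mmult S R0 R0 a b = (\<Sum>c\<in>S. (\<Sum>e\<in>E. of_real (sqrt (y e)) * e a * cnj (e c)) * (\<Sum>f\<in>E. of_real (sqrt (y f)) * f c * cnj (f b)))"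
        unfolding mmult_def using a b R0S by simp
      also have "\<dots> = (\<Sum>e\<in>E. of_real (sqrt (y e)) * of_real (sqrt (y e)) * e a * cnj (e b))"
        by (rule prod_decomp[OF E a b])
      also have "\<dots> = Y a b" using Y a b ypos
        by (simp add: of_real_mult[symmetric] del: of_real_mult)
      finally show "mmult S R0 R0 a b = Y a b" .
    qed
  qed
  have uniq: "R = R0" if PR: "psd_on S R \<and> (\<forall>a b. (a \<notin> S \<or> b \<notin> S) \<longrightarrow> R a b = 0) \<and> (\<forall>a\<in>S. \<forall>b\<in>S. mmult S R R a b = Y a b)" for R
  proof -
    have psd: "psd_on S R" and R0out: "\<And>a b. a \<notin> S \<or> b \<notin> S \<Longrightarrow> R a b = 0"
      and RR: "\<And>a b. a \<in> S \<Longrightarrow> b \<in> S \<Longrightarrow> mmult S R R a b = Y a b" using PR by auto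
    have herm: "hermitian_on S R" using psd unfolding psd_on_def by blast
    have Reig: "mapply S R g a = of_real (sqrt (y g)) * g a" if g: "g \<in> E" and a: "a \<in> S" for g a
    proof -
      define s where "s = sqrt (y g)"
      have s0: "s \<ge> 0" unfolding s_def using ypos g by simp
      have ss: "s * s = y g" unfolding s_def using ypos g by simp
      define Rg where "Rg = mapply S R g"
      have Yg: "mapply S Y g c = of_real (y g) * g c" if "c \<in> S" for c
        by (rule mapply_decomp_basis[OF E that Y g])
      have RRg: "mapply S R Rg c = of_real (y g) * g c" if c: "c \<in> S" for c
      proof -
        have "mapply S R Rg c = (\<Sum>d\<in>S. \<Sum>b\<in>S. R c d * (R d b * g b))"
          unfolding Rg_def mapply_def by (simp add: sum_distrib_left)
        also have "\<dots> = (\<Sum>b\<in>S. \<Sum>d\<in>S. R c d * (R d b * g b))" by (rule sum.swap)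
        also have "\<dots> = (\<Sum>b\<in>S. mmult S R R c b * g b)"
          unfolding mmult_def by (simp add: sum_distrib_right sum_distrib_left mult_ac)
        also have "\<dots> = mapply S Y g c" unfolding mapply_def using RR c by simp
        finally show ?thesis using Yg c by simp
      qed
      show ?thesis
      proof (cases "s = 0")
        case True
        then have y0: "y g = 0" using ss by simp
        have "ip S Rg Rg = ip S g (mapply S R Rg)" unfolding Rg_def by (rule herm_ip[OF herm, symmetric])
        also have "\<dots> = ip S g (\<lambda>c. 0)" by (rule ip_cong) (auto simp: RRg y0)
        also have "\<dots> = 0" by (simp add: ip_def)
        finally have "Rg a = 0" using ip_self_zero[of S Rg a] a by simp
        then show ?thesis using True unfolding Rg_def s_def by simp
      next
        case False
        then have spos: "s > 0" using s0 by simp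
        define w where "w = (\<lambda>c. Rg c - of_real s * g c)"
        have Rw: "mapply S R w c = - of_real s * w c" if c: "c \<in> S" for c
        proof -
          have "mapply S R w c = mapply S R Rg c - of_real s * Rg c"
            unfolding w_def Rg_def by (simp add: mapply_def right_diff_distrib sum_subtractf sum_distrib_left mult_ac)
          also have "\<dots> = of_real (s * s) * g c - of_real s * Rg c" using RRg c ss by simp
          also have "\<dots> = - of_real s * w c" unfolding w_def by (simp add: algebra_simps)
          finally show ?thesis .
        qed
        have "ip S w (mapply S R w) = ip S w (\<lambda>c. - of_real s * w c)" by (rule ip_cong) (auto simp: Rw)
        also have "\<dots> = - of_real s * ip S w w" by (rule ip_scale_right)
        finally have "Re (ip S w (mapply S R w)) = - s * Re (ip S w w)" by simp
        then have "s * Re (ip S w w) \<le> 0" using psd_ip[OF psd, of w] by simp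
        then have "Re (ip S w w) = 0" using spos ip_self_ge0[of S w] by (simp add: mult_le_0_iff)
        then have "w a = 0" using ip_self_zero[of S w a] a by simp
        then show ?thesis unfolding w_def Rg_def s_def by simp
      qed
    qed
    show "R = R0"
    proof (intro ext)
      fix a b
      show "R a b = R0 a b"
      proof (cases "a \<in> S \<and> b \<in> S")
        case True
        then have a: "a \<in> S" and b: "b \<in> S" by auto
        have "R a b = (\<Sum>c\<in>S. R a c * (if c = b then 1 else 0))" using b by (simp add: if_distrib sum.delta' cong: if_cong)
        also have "\<dots> = (\<Sum>c\<in>S. R a c * (\<Sum>e\<in>E. e c * cnj (e b)))"
          by (rule sum.cong) (use onb_compl[OF E _ b] in auto)
        also have "\<dots> = (\<Sum>e\<in>E. mapply S R e a * cnj (e b))"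
          unfolding mapply_def by (simp add: sum_distrib_left sum_distrib_right sum.swap[of _ S] mult_ac)
        also have "\<dots> = (\<Sum>e\<in>E. of_real (sqrt (y e)) * e a * cnj (e b))"
          by (rule sum.cong) (use Reig a in auto)
        finally show ?thesis unfolding R0_def using True by simp
      next
        case False then show ?thesis using R0out unfolding R0_def by auto
      qed
    qed
  qed
  show ?thesis unfolding psd_sqrt_def R0_def[symmetric]
  proof (rule the_equality)
    show "psd_on S R0 \<and> (\<forall>a b. (a \<notin> S \<or> b \<notin> S) \<longrightarrow> R0 a b = 0) \<and> (\<forall>a\<in>S. \<forall>b\<in>S. mmult S R0 R0 a b = Y a b)"
      by (rule P0)
  next
    fix R assume "psd_on S R \<and> (\<forall>a b. (a \<notin> S \<or> b \<notin> S) \<longrightarrow> R a b = 0) \<and> (\<forall>a\<in>S. \<forall>b\<in>S. mmult S R R a b = Y a b)"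
    then show "R = R0" by (rule uniq)
  qed
qed

lemma ip_mapply_expand:
  "ip S e (mapply S M e) = (\<Sum>a\<in>S. \<Sum>b\<in>S. e a * cnj (e b) * M b a)"
proof -
  have "ip S e (mapply S M e) = (\<Sum>b\<in>S. \<Sum>a\<in>S. cnj (e b) * (M b a * e a))"
    unfolding ip_def mapply_def by (simp add: sum_distrib_left)
  also have "\<dots> = (\<Sum>a\<in>S. \<Sum>b\<in>S. cnj (e b) * (M b a * e a))" by (rule sum.swap)
  also have "\<dots> = (\<Sum>a\<in>S. \<Sum>b\<in>S. e a * cnj (e b) * M b a)" by (simp add: mult_ac)
  finally show ?thesis .
qed

lemma trace_norm_spec:
  fixes S :: "'i::finite set"
  assumes herm: "hermitian_on S X" and sp: "spec S X E ev"
  shows "trace_norm S X = (\<Sum>e\<in>E. \<bar>ev e\<bar>)"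
proof -
  have E: "onb S E" and X: "\<forall>a\<in>S. \<forall>b\<in>S. X a b = (\<Sum>e\<in>E. of_real (ev e) * e a * cnj (e b))"
    using sp unfolding spec_def by auto
  have Y: "\<forall>a\<in>S. \<forall>b\<in>S. mmult S (adj X) X a b = (\<Sum>e\<in>E. of_real ((ev e)\<^sup>2) * e a * cnj (e b))"
  proof (intro ballI)
    fix a b assume a: "a \<in> S" and b: "b \<in> S"
    have "mmult S (adj X) X a b = (\<Sum>c\<in>S. X a c * X c b)"
      unfolding mmult_def adj_def
    proof (intro sum.cong refl)
      fix c assume c: "c \<in> S"
      have "X a c = cnj (X c a)" using herm a c unfolding hermitian_on_def by blast
      then show "cnj (X c a) * X c b = X a c * X c b" by simp
    qed
    also have "\<dots> = (\<Sum>c\<in>S. (\<Sum>e\<in>E. of_real (ev e) * e a * cnj (e c)) * (\<Sum>f\<in>E. of_real (ev f) * f c * cnj (f b)))"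
      by (intro sum.cong) (use X a b in auto)
    also have "\<dots> = (\<Sum>e\<in>E. of_real (ev e) * of_real (ev e) * e a * cnj (e b))"
      by (rule prod_decomp[OF E a b])
    finally show "mmult S (adj X) X a b = (\<Sum>e\<in>E. of_real ((ev e)\<^sup>2) * e a * cnj (e b))"
      by (simp add: power2_eq_square)
  qed
  have sq: "psd_sqrt S (mmult S (adj X) X) = (\<lambda>a b. if a \<in> S \<and> b \<in> S then (\<Sum>e\<in>E. of_real (sqrt ((ev e)\<^sup>2)) * e a * cnj (e b)) else 0)"
    by (rule sqrt_char[OF E _ Y]) simp
  have "mtrace S (psd_sqrt S (mmult S (adj X) X)) = (\<Sum>a\<in>S. \<Sum>e\<in>E. of_real \<bar>ev e\<bar> * e a * cnj (e a))"
    unfolding sq mtrace_def by simp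
  also have "\<dots> = (\<Sum>e\<in>E. of_real \<bar>ev e\<bar> * ip S e e)"
    unfolding ip_def by (simp add: sum_distrib_left sum.swap[of _ S E] mult_ac)
  also have "\<dots> = (\<Sum>e\<in>E. of_real \<bar>ev e\<bar>)"
    by (intro sum.cong) (auto simp: onb_orth[OF E])
  finally show ?thesis unfolding trace_norm_def by simp
qed

lemma trace_bound:
  fixes S :: "'i::finite set"
  assumes sp: "spec S X E ev" and K: "\<And>e. e \<in> E \<Longrightarrow> cmod (ip S e (mapply S M e)) \<le> K"
  shows "cmod (\<Sum>a\<in>S. \<Sum>b\<in>S. X a b * M b a) \<le> K * (\<Sum>e\<in>E. \<bar>ev e\<bar>)"
proof -
  have E: "onb S E" and X: "\<forall>a\<in>S. \<forall>b\<in>S. X a b = (\<Sum>e\<in>E. of_real (ev e) * e a * cnj (e b))"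
    using sp unfolding spec_def by auto
  have "(\<Sum>a\<in>S. \<Sum>b\<in>S. X a b * M b a) = (\<Sum>a\<in>S. \<Sum>b\<in>S. \<Sum>e\<in>E. of_real (ev e) * (e a * cnj (e b) * M b a))"
    by (intro sum.cong refl) (use X in \<open>auto simp: sum_distrib_right sum_distrib_left mult_ac\<close>)
  also have "\<dots> = (\<Sum>e\<in>E. of_real (ev e) * (\<Sum>a\<in>S. \<Sum>b\<in>S. e a * cnj (e b) * M b a))"
    by (simp add: sum_distrib_left sum.swap[of _ S E])
  also have "\<dots> = (\<Sum>e\<in>E. of_real (ev e) * ip S e (mapply S M e))"
    by (simp add: ip_mapply_expand)
  finally have eq: "(\<Sum>a\<in>S. \<Sum>b\<in>S. X a b * M b a) = (\<Sum>e\<in>E. of_real (ev e) * ip S e (mapply S M e))" .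
  have "cmod (\<Sum>e\<in>E. of_real (ev e) * ip S e (mapply S M e)) \<le> (\<Sum>e\<in>E. cmod (of_real (ev e) * ip S e (mapply S M e)))"
    by (rule norm_sum)
  also have "\<dots> \<le> (\<Sum>e\<in>E. \<bar>ev e\<bar> * K)"
    by (intro sum_mono) (simp add: norm_mult K mult_left_mono)
  finally show ?thesis unfolding eq by (simp add: sum_distrib_left mult_ac)
qed

lemma real_key:
  fixes a x s :: real
  assumes a: "a > 0" and xa: "a \<le> x" and s0: "s \<ge> 0" and s1: "s \<le> a * (1 - x)"
    and g: "0 \<le> x * (s + (1-x)\<^sup>2) * (x * s - a * (s + (1-x)\<^sup>2))"
  shows "a\<^sup>2 \<le> a * x - s"
proof -
  have x0: "x > 0" using a xa by simp
  have x1: "x \<le> 1"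
  proof (rule ccontr)
    assume "\<not> x \<le> 1" then have "a * (1 - x) < 0" using a by (simp add: mult_pos_neg)
    then show False using s0 s1 by simp
  qed
  show ?thesis
  proof (cases "s + (1-x)\<^sup>2 = 0")
    case True
    then have "s = 0" "(1-x)\<^sup>2 = 0" using s0 by (simp_all add: add_nonneg_eq_0_iff)
    then have "x = 1" "s = 0" by simp_all
    then show ?thesis using xa a by (simp add: power2_eq_square)
  next
    case False
    then have C: "s + (1-x)\<^sup>2 > 0" using s0 by (simp add: add_nonneg_pos order_less_le)
    have "x * (s + (1-x)\<^sup>2) > 0" using x0 C by simp
    then have h: "x * s - a * (s + (1-x)\<^sup>2) \<ge> 0" using g zero_le_mult_iff by (metis not_less)
    define p where "p = x - a"
    have p0: "p \<ge> 0" using xa p_def by simp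
    have ps: "p * s \<ge> a * (1-x)\<^sup>2" using h unfolding p_def by (simp add: algebra_simps)
    show ?thesis
    proof (rule ccontr)
      assume "\<not> ?thesis"
      then have sp: "s > a * p" unfolding p_def by (simp add: algebra_simps power2_eq_square)
      have "a * p \<ge> 0" using a p0 by simp
      then have spos: "s > 0" using sp by simp
      have "s * s > (a * p) * s" using sp spos by (simp add: mult_strict_right_mono)
      moreover have "(a * p) * s \<ge> a * (a * (1-x)\<^sup>2)" using ps a by (simp add: mult.assoc mult_left_mono)
      moreover have "a * (a * (1-x)\<^sup>2) = (a * (1 - x))\<^sup>2" by (simp add: power2_eq_square)
      moreover have "(a * (1 - x))\<^sup>2 \<ge> s\<^sup>2" using s0 s1 by (simp add: power_mono)
      ultimately show False by (simp add: power2_eq_square mult_ac)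
    qed
  qed
qed

lemma zcz: "z * cnj z = (complex_of_real (cmod z))\<^sup>2"
  by (metis complex_norm_square of_real_power)

lemma cmod_ip_swap: "cmod (ip S u v) = cmod (ip S v u)"
  by (metis complex_mod_cnj ip_cnj)

lemma sum_orth_single:
  fixes d :: "('i \<Rightarrow> complex) \<Rightarrow> real"
  assumes fin: "finite E" and u: "u \<in> E" and orth: "\<And>e. e \<in> E \<Longrightarrow> ip S e u = (if e = u then 1 else 0)"
  shows "(\<Sum>e\<in>E. d e * (cmod (ip S e u))\<^sup>2) = d u"
proof -
  have "(\<Sum>e\<in>E. d e * (cmod (ip S e u))\<^sup>2) = (\<Sum>e\<in>E. if e = u then d e else 0)"
    by (intro sum.cong refl) (simp add: orth)
  then show ?thesis using fin u by simp
qed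

lemma fidelity_bound:
  fixes \<rho> :: "'i::finite \<Rightarrow> 'i \<Rightarrow> complex" and \<psi> :: "'i \<Rightarrow> complex"
  assumes psd: "psd_on UNIV \<rho>" and tr: "mtrace UNIV \<rho> = 1" and nrm: "ip UNIV \<psi> \<psi> = 1"
  shows "trace_norm UNIV (\<lambda>a b. \<rho> a b - projector \<psi> a b) \<le> 2 * sqrt (1 - Re (ip UNIV \<psi> (mapply UNIV \<rho> \<psi>)))"
proof -
  define S where "S = (UNIV :: 'i set)"
  define D where "D = (\<lambda>a b. \<rho> a b - projector \<psi> a b)"
  have herm\<rho>: "hermitian_on S \<rho>" using psd unfolding psd_on_def S_def by blast
  have herm: "hermitian_on S D"
    unfolding hermitian_on_def
  proof (intro ballI)
    fix a b assume "a \<in> S" "b \<in> S"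
    then have "\<rho> a b = cnj (\<rho> b a)" using herm\<rho> unfolding hermitian_on_def by blast
    then show "D a b = cnj (D b a)" unfolding D_def projector_def by simp
  qed
  obtain E d where sp: "spec S D E d" using spectral_spec[OF herm] by blast
  have E: "onb S E" and Dd: "\<forall>a\<in>S. \<forall>b\<in>S. D a b = (\<Sum>e\<in>E. of_real (d e) * e a * cnj (e b))"
    using sp unfolding spec_def by auto
  have fin: "finite E" using onb_fin[OF E] .
  have orth: "\<And>e f. e \<in> E \<Longrightarrow> f \<in> E \<Longrightarrow> ip S e f = (if e = f then 1 else 0)" using onb_orth[OF E] .
  have mD: "mapply S D v = (\<lambda>a. mapply S \<rho> v a - ip S \<psi> v * \<psi> a)" for v
    unfolding D_def projector_def mapply_def ip_def
    by (simp add: left_diff_distrib right_diff_distrib sum_subtractf sum_distrib_left mult_ac)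
  have quadD: "ip S v (mapply S D v) = of_real (\<Sum>e\<in>E. d e * (cmod (ip S e v))\<^sup>2)" for v
  proof -
    have "mapply S D v = (\<lambda>a. \<Sum>e\<in>E. (of_real (d e) * ip S e v) * e a)"
      using mapply_decomp[OF E _ Dd] unfolding S_def by (auto simp: mult_ac)
    then have "ip S v (mapply S D v) = (\<Sum>e\<in>E. (of_real (d e) * ip S e v) * ip S v e)"
      by (simp add: ip_sum_right)
    also have "\<dots> = (\<Sum>e\<in>E. of_real (d e * (cmod (ip S e v))\<^sup>2))"
      by (intro sum.cong refl) (simp add: ip_cnj[of S e v for e, symmetric] zcz mult_ac)
    finally show ?thesis by simp
  qed
  have quad\<rho>: "Re (ip S v (mapply S \<rho> v)) = (\<Sum>e\<in>E. d e * (cmod (ip S e v))\<^sup>2) + (cmod (ip S \<psi> v))\<^sup>2" for v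
  proof -
    have "ip S v (mapply S D v) = ip S v (mapply S \<rho> v) - ip S \<psi> v * ip S v \<psi>"
      unfolding mD by (simp only: ip_diff_right ip_scale_right)
    then have e1: "ip S v (mapply S \<rho> v) = ip S v (mapply S D v) + ip S \<psi> v * ip S v \<psi>" by simp
    have e2: "ip S \<psi> v * ip S v \<psi> = of_real ((cmod (ip S \<psi> v))\<^sup>2)"
      by (metis complex_norm_square ip_cnj)
    have "ip S v (mapply S \<rho> v) = of_real ((\<Sum>e\<in>E. d e * (cmod (ip S e v))\<^sup>2) + (cmod (ip S \<psi> v))\<^sup>2)"
      by (simp only: e1 e2 quadD of_real_add)
    then show ?thesis by (simp only: Re_complex_of_real)
  qed
  have pos: "0 \<le> (\<Sum>e\<in>E. d e * (cmod (ip S e v))\<^sup>2) + (cmod (ip S \<psi> v))\<^sup>2" for v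
    using psd_ip[OF psd, of v] quad\<rho>[of v] unfolding S_def by simp
  have sumd: "(\<Sum>e\<in>E. d e) = 0"
  proof -
    have "mtrace S D = (\<Sum>a\<in>S. \<Sum>e\<in>E. of_real (d e) * e a * cnj (e a))"
      unfolding mtrace_def using Dd by simp
    also have "\<dots> = (\<Sum>e\<in>E. of_real (d e) * ip S e e)"
      unfolding ip_def by (simp add: sum_distrib_left sum.swap[of _ S E] mult_ac)
    also have "\<dots> = of_real (\<Sum>e\<in>E. d e)" by (simp add: orth)
    finally have 1: "mtrace S D = of_real (\<Sum>e\<in>E. d e)" .
    have "mtrace S D = mtrace S \<rho> - ip S \<psi> \<psi>"
      unfolding mtrace_def D_def projector_def ip_def by (simp add: sum_subtractf mult.commute)
    also have "\<dots> = 0" using tr nrm unfolding S_def by simp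
    finally have "mtrace S D = 0" .
    then have "(of_real (\<Sum>e\<in>E. d e) :: complex) = 0" using 1 by simp
    then show ?thesis by (simp only: of_real_eq_0_iff)
  qed
  have parseval: "(\<Sum>e\<in>E. (cmod (ip S e \<psi>))\<^sup>2) = 1"
  proof -
    have \<psi>exp: "\<psi> = (\<lambda>a. \<Sum>e\<in>E. ip S e \<psi> * e a)"
    proof
      fix a
      have "(\<Sum>e\<in>E. ip S e \<psi> * e a) = (\<Sum>b\<in>S. (\<Sum>e\<in>E. e a * cnj (e b)) * \<psi> b)"
        unfolding ip_def by (simp add: sum_distrib_left sum_distrib_right sum.swap[of _ E S] mult_ac)
      also have "\<dots> = (\<Sum>b\<in>S. (if a = b then 1 else 0) * \<psi> b)"
        by (intro sum.cong refl) (simp add: onb_compl[OF E] S_def)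
      also have "\<dots> = (\<Sum>b\<in>S. if a = b then \<psi> b else 0)" by (intro sum.cong) auto
      also have "\<dots> = \<psi> a" by (simp add: S_def)
      finally show "\<psi> a = (\<Sum>e\<in>E. ip S e \<psi> * e a)" by simp
    qed
    have "ip S \<psi> \<psi> = (\<Sum>e\<in>E. ip S e \<psi> * ip S \<psi> e)"
      by (subst (2) \<psi>exp) (simp add: ip_sum_right)
    also have "\<dots> = of_real (\<Sum>e\<in>E. (cmod (ip S e \<psi>))\<^sup>2)"
      by (simp add: ip_cnj[of S e \<psi> for e, symmetric] zcz)
    finally show ?thesis using nrm unfolding S_def by (metis of_real_eq_1_iff)
  qed
  have tn: "trace_norm S D = (\<Sum>e\<in>E. \<bar>d e\<bar>)" by (rule trace_norm_spec[OF herm sp])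
  have F: "Re (ip S \<psi> (mapply S \<rho> \<psi>)) = 1 + (\<Sum>e\<in>E. d e * (cmod (ip S e \<psi>))\<^sup>2)"
    using quad\<rho>[of \<psi>] nrm unfolding S_def by simp
  show ?thesis
  proof (cases "\<forall>e\<in>E. d e \<ge> 0")
    case True
    then have "\<forall>e\<in>E. d e = 0" using sumd sum_nonneg_eq_0_iff[OF fin] by blast
    then show ?thesis using tn F unfolding S_def D_def by simp
  next
    case False
    then obtain u where u: "u \<in> E" "d u < 0" by (auto simp: not_le)
    define a where "a = - d u"
    have a0: "a > 0" using u a_def by simp
    have others: "d f \<ge> 0" if f: "f \<in> E" "f \<noteq> u" for f
    proof (rule ccontr)
      assume "\<not> d f \<ge> 0" then have df: "d f < 0" by simp
      show False
      proof (cases "ip S \<psi> f = 0 \<and> ip S \<psi> u = 0")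
        case True
        have "(\<Sum>e\<in>E. d e * (cmod (ip S e u))\<^sup>2) = d u"
          using fin u by (intro sum_orth_single) (auto simp: orth)
        then show False using pos[of u] True u by simp
      next
        case False
        define \<alpha> where "\<alpha> = ip S \<psi> f"
        define \<beta> where "\<beta> = - ip S \<psi> u"
        define w where "w = (\<lambda>b. \<alpha> * u b + \<beta> * f b)"
        have ipw: "ip S e w = \<alpha> * (if e = u then 1 else 0) + \<beta> * (if e = f then 1 else 0)" if "e \<in> E" for e
          unfolding w_def using that u f by (simp add: ip_add_right ip_scale_right orth)
        have "ip S \<psi> w = 0" unfolding w_def ip_add_right ip_scale_right \<alpha>_def \<beta>_def by simp
        moreover have "(\<Sum>e\<in>E. d e * (cmod (ip S e w))\<^sup>2)
            = (\<Sum>e\<in>E. (if e = u then d u * (cmod \<alpha>)\<^sup>2 else 0) + (if e = f then d f * (cmod \<beta>)\<^sup>2 else 0))"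
          by (intro sum.cong refl) (use f in \<open>auto simp: ipw\<close>)
        moreover have "\<dots> = d u * (cmod \<alpha>)\<^sup>2 + d f * (cmod \<beta>)\<^sup>2"
          using fin u f by (simp add: sum.distrib sum.delta')
        moreover have "d u * (cmod \<alpha>)\<^sup>2 + d f * (cmod \<beta>)\<^sup>2 < 0"
        proof -
          have "\<alpha> \<noteq> 0 \<or> \<beta> \<noteq> 0" using False unfolding \<alpha>_def \<beta>_def by simp
          then have "(cmod \<alpha>)\<^sup>2 > 0 \<or> (cmod \<beta>)\<^sup>2 > 0" by simp
          moreover have "d u * (cmod \<alpha>)\<^sup>2 \<le> 0" "d f * (cmod \<beta>)\<^sup>2 \<le> 0"
            using u df by (simp_all add: mult_nonpos_nonneg)
          moreover have "(cmod \<alpha>)\<^sup>2 > 0 \<Longrightarrow> d u * (cmod \<alpha>)\<^sup>2 < 0" using u by (simp add: mult_neg_pos)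
          moreover have "(cmod \<beta>)\<^sup>2 > 0 \<Longrightarrow> d f * (cmod \<beta>)\<^sup>2 < 0" using df by (simp add: mult_neg_pos)
          ultimately show ?thesis by linarith
        qed
        ultimately show False using pos[of w] by simp
      qed
    qed
    have abs_sum: "(\<Sum>e\<in>E. \<bar>d e\<bar>) = 2 * a"
    proof -
      have "(\<Sum>e\<in>E. \<bar>d e\<bar>) = (\<Sum>e\<in>E. d e + (if e = u then 2 * a else 0))"
        by (intro sum.cong refl) (use others a_def u in auto)
      also have "\<dots> = 2 * a" using sumd fin u by (simp add: sum.distrib sum.delta')
      finally show ?thesis .
    qed
    define c where "c = ip S u \<psi>"
    define x where "x = (cmod c)\<^sup>2"
    define s where "s = (\<Sum>e\<in>E - {u}. d e * (cmod (ip S e \<psi>))\<^sup>2)"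
    have split: "(\<Sum>e\<in>E. d e * (cmod (ip S e \<psi>))\<^sup>2) = - a * x + s"
      unfolding s_def x_def c_def a_def using fin u by (simp add: sum.remove)
    have oneF: "1 - Re (ip S \<psi> (mapply S \<rho> \<psi>)) = a * x - s" using F split by simp
    have c1: "a \<le> x"
    proof -
      have "(\<Sum>e\<in>E. d e * (cmod (ip S e u))\<^sup>2) = d u"
        using fin u by (intro sum_orth_single) (auto simp: orth)
      then show ?thesis using pos[of u] unfolding x_def c_def a_def by (simp add: cmod_ip_swap)
    qed
    have c2: "s \<ge> 0" unfolding s_def by (intro sum_nonneg) (simp add: others)
    have c3: "s \<le> a * (1 - x)"
    proof -
      have px: "(\<Sum>e\<in>E - {u}. (cmod (ip S e \<psi>))\<^sup>2) = 1 - x"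
        using parseval fin u unfolding x_def c_def by (simp add: sum.remove)
      have "s \<le> (\<Sum>e\<in>E - {u}. d e * (1 - x))"
        unfolding s_def
      proof (intro sum_mono mult_left_mono)
        fix e assume e: "e \<in> E - {u}"
        show "(cmod (ip S e \<psi>))\<^sup>2 \<le> 1 - x"
          unfolding px[symmetric] using fin e by (intro member_le_sum) auto
        show "0 \<le> d e" using e others by auto
      qed
      also have "\<dots> = (1 - x) * (\<Sum>e\<in>E - {u}. d e)" by (simp add: sum_distrib_left mult.commute)
      also have "(\<Sum>e\<in>E - {u}. d e) = a" using sumd fin u unfolding a_def by (simp add: sum.remove)
      finally show ?thesis by (simp add: mult.commute)
    qed
    have c4: "0 \<le> x * (s + (1-x)\<^sup>2) * (x * s - a * (s + (1-x)\<^sup>2))"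
    proof -
      define C where "C = s + (1-x)\<^sup>2"
      define t where "t = - (x * (1 - x))"
      define v where "v = (\<lambda>b. of_real C * (c * u b) + of_real t * (\<psi> b - c * u b))"
      have ipv: "ip S e v = (if e = u then of_real C * c else of_real t * ip S e \<psi>)" if e: "e \<in> E" for e
        unfolding v_def using e u by (simp add: ip_add_right ip_scale_right ip_diff_right orth c_def)
      have "(\<Sum>e\<in>E. d e * (cmod (ip S e v))\<^sup>2) = d u * (C\<^sup>2 * x) + (\<Sum>e\<in>E - {u}. d e * (cmod (ip S e v))\<^sup>2)"
        using fin u ipv[OF u(1)] unfolding x_def by (simp add: sum.remove norm_mult power_mult_distrib)
      also have "(\<Sum>e\<in>E - {u}. d e * (cmod (ip S e v))\<^sup>2) = t\<^sup>2 * s"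
        unfolding s_def sum_distrib_left
        by (intro sum.cong refl) (auto simp: ipv norm_mult power_mult_distrib)
      finally have q1: "(\<Sum>e\<in>E. d e * (cmod (ip S e v))\<^sup>2) = - a * C\<^sup>2 * x + t\<^sup>2 * s"
        unfolding a_def by simp
      have "ip S \<psi> v = of_real C * (c * cnj c) + of_real t * (1 - c * cnj c)"
        unfolding v_def using nrm
        by (simp add: ip_add_right ip_scale_right ip_diff_right c_def S_def ip_cnj[of UNIV u \<psi>])
      also have "c * cnj c = of_real x" unfolding x_def by (simp add: zcz)
      finally have "ip S \<psi> v = of_real (C * x + t * (1 - x))" by simp
      then have q2: "(cmod (ip S \<psi> v))\<^sup>2 = (C * x + t * (1 - x))\<^sup>2" by (simp only: norm_of_real power2_abs)
      have "0 \<le> - a * C\<^sup>2 * x + t\<^sup>2 * s + (C * x + t * (1 - x))\<^sup>2"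
        using pos[of v] q1 q2 by simp
      also have "- a * C\<^sup>2 * x + t\<^sup>2 * s + (C * x + t * (1 - x))\<^sup>2 = x * C * (x * s - a * C)"
        unfolding t_def C_def by (simp add: power2_eq_square algebra_simps)
      finally show ?thesis unfolding C_def .
    qed
    have "a\<^sup>2 \<le> a * x - s" by (rule real_key[OF a0 c1 c2 c3 c4])
    then have "a \<le> sqrt (a * x - s)" by (rule real_le_rsqrt)
    then show ?thesis using tn abs_sum oneF unfolding S_def D_def by simp
  qed
qed

lemma vnorm_L2: "vnorm S v = L2_set (\<lambda>a. cmod (v a)) S"
  unfolding vnorm_def L2_set_def by simp

lemma vnorm_ip: "vnorm S v = sqrt (Re (ip S v v))"
  unfolding vnorm_def by (simp add: ip_self_real)

lemma vnorm_scale: "vnorm S (\<lambda>a. c * v a) = cmod c * vnorm S v"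
  unfolding vnorm_def by (simp add: norm_mult power_mult_distrib sum_distrib_left[symmetric] real_sqrt_mult)

lemma cauchy_schwarz: "cmod (ip S u v) \<le> vnorm S u * vnorm S v"
proof -
  have "cmod (ip S u v) \<le> (\<Sum>a\<in>S. cmod (cnj (u a) * v a))" unfolding ip_def by (rule norm_sum)
  also have "\<dots> = (\<Sum>a\<in>S. \<bar>cmod (u a)\<bar> * \<bar>cmod (v a)\<bar>)" by (simp add: norm_mult)
  also have "\<dots> \<le> L2_set (\<lambda>a. cmod (u a)) S * L2_set (\<lambda>a. cmod (v a)) S" by (rule L2_set_mult_ineq)
  finally show ?thesis by (simp add: vnorm_L2)
qed

lemma opnorm_bdd:
  assumes fin: "finite S"
  shows "bdd_above {vnorm S (mapply S X v) | v. vnorm S v \<le> 1}"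
proof -
  define r where "r = (\<Sum>a\<in>S. \<Sum>b\<in>S. cmod (X a b))"
  have "vnorm S (mapply S X v) \<le> r" if v: "vnorm S v \<le> 1" for v
  proof -
    have vb: "cmod (v b) \<le> 1" if b: "b \<in> S" for b
    proof -
      have "(cmod (v b))\<^sup>2 \<le> (\<Sum>a\<in>S. (cmod (v a))\<^sup>2)" using fin b by (intro member_le_sum) auto
      also have "\<dots> \<le> 1" using v unfolding vnorm_def by (simp add: real_sqrt_le_1_iff)
      finally show ?thesis by (simp add: power_le_one_iff)
    qed
    have "vnorm S (mapply S X v) \<le> (\<Sum>a\<in>S. \<bar>cmod (mapply S X v a)\<bar>)"
      unfolding vnorm_L2 by (rule L2_set_le_sum_abs)
    also have "\<dots> \<le> r" unfolding r_def
    proof (intro sum_mono)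
      fix a assume a: "a \<in> S"
      have "cmod (mapply S X v a) \<le> (\<Sum>b\<in>S. cmod (X a b * v b))" unfolding mapply_def by (rule norm_sum)
      also have "\<dots> \<le> (\<Sum>b\<in>S. cmod (X a b))"
      proof (intro sum_mono)
        fix b assume "b \<in> S"
        then have "cmod (X a b) * cmod (v b) \<le> cmod (X a b) * 1" using vb by (intro mult_left_mono) auto
        then show "cmod (X a b * v b) \<le> cmod (X a b)" by (simp add: norm_mult)
      qed
      finally show "\<bar>cmod (mapply S X v a)\<bar> \<le> (\<Sum>b\<in>S. cmod (X a b))" by simp
    qed
    finally show ?thesis .
  qed
  then show ?thesis unfolding bdd_above_def by blast
qed

lemma opnorm_nonneg:
  assumes fin: "finite S" shows "opnorm S X \<ge> 0"
proof -
  have z: "vnorm S (mapply S X (\<lambda>_. 0)) = 0" by (simp add: vnorm_def mapply_def)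
  have "vnorm S (\<lambda>_. 0::complex) \<le> 1" by (simp add: vnorm_def)
  then have mem: "vnorm S (mapply S X (\<lambda>_. 0)) \<in> {vnorm S (mapply S X v) | v. vnorm S v \<le> 1}"
    by blast
  have "vnorm S (mapply S X (\<lambda>_. 0)) \<le> opnorm S X"
    unfolding opnorm_def by (rule cSup_upper[OF mem opnorm_bdd[OF fin]])
  then show ?thesis using z by simp
qed

lemma opnorm_bound:
  assumes fin: "finite S"
  shows "vnorm S (mapply S X v) \<le> opnorm S X * vnorm S v"
proof (cases "vnorm S v = 0")
  case True
  then have "Re (ip S v v) = 0" unfolding vnorm_ip using ip_self_ge0[of S v] by simp
  then have "\<And>b. b \<in> S \<Longrightarrow> v b = 0" using ip_self_zero[OF fin] by blast
  then have "mapply S X v = (\<lambda>_. 0)" unfolding mapply_def by (auto intro: sum.neutral)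
  then show ?thesis using True by (simp add: vnorm_def)
next
  case False
  have "vnorm S v \<ge> 0" unfolding vnorm_def by (simp add: sum_nonneg)
  then have n: "vnorm S v > 0" using False by (simp add: order_less_le)
  define v' where "v' = (\<lambda>a. of_real (1 / vnorm S v) * v a)"
  have "vnorm S v' = 1" unfolding v'_def vnorm_scale using n by (simp add: norm_divide)
  then have "vnorm S (mapply S X v') \<le> opnorm S X"
    unfolding opnorm_def by (intro cSup_upper[OF _ opnorm_bdd[OF fin]]) auto
  moreover have "vnorm S (mapply S X v') = vnorm S (mapply S X v) / vnorm S v"
    unfolding v'_def mapply_scale vnorm_scale using n by (simp add: norm_divide)
  ultimately show ?thesis using n by (simp add: field_simps)
qed

lemma quad_opnorm:
  assumes fin: "finite S"
  shows "cmod (ip S w (mapply S X w)) \<le> opnorm S X * Re (ip S w w)"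
proof -
  have "cmod (ip S w (mapply S X w)) \<le> vnorm S w * vnorm S (mapply S X w)" by (rule cauchy_schwarz)
  also have "\<dots> \<le> vnorm S w * (opnorm S X * vnorm S w)"
    by (intro mult_left_mono opnorm_bound[OF fin]) (simp add: vnorm_def sum_nonneg)
  also have "\<dots> = opnorm S X * (vnorm S w)\<^sup>2" by (simp add: power2_eq_square)
  also have "(vnorm S w)\<^sup>2 = Re (ip S w w)" unfolding vnorm_ip using ip_self_ge0[of S w] by simp
  finally show ?thesis .
qed

lemma configs_iff: "\<sigma> \<in> configs A \<longleftrightarrow> (\<forall>i. i \<notin> A \<longrightarrow> \<sigma> i = undefined)"
  unfolding configs_def PiE_iff extensional_def by auto

lemma restrict_configs: "restrict \<sigma> A \<in> configs A"
  unfolding configs_iff by simp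

lemma restrict_merge: "\<sigma> \<in> configs A \<Longrightarrow> restrict (merge A \<sigma> \<omega>) A = \<sigma>"
  unfolding configs_iff merge_def by (auto simp: restrict_def)

lemma restrict_merge2: "\<omega> \<in> configs (- A) \<Longrightarrow> restrict (merge A \<sigma> \<omega>) (- A) = \<omega>"
  unfolding configs_iff merge_def by (auto simp: restrict_def)

lemma merge_restrict: "(\<And>i. i \<notin> A \<Longrightarrow> \<omega> i = \<alpha> i) \<Longrightarrow> merge A (restrict \<alpha> A) \<omega> = \<alpha>"
  unfolding merge_def by (auto simp: restrict_def)

lemma finite_configs: "finite (configs (A :: ('s::finite) set) :: ('s \<Rightarrow> 'q::finite) set)"
  by (rule finite_subset[of _ UNIV]) auto

lemma local_trace:
  fixes D M :: "('s::finite \<Rightarrow> 'q::finite) \<Rightarrow> ('s \<Rightarrow> 'q) \<Rightarrow> complex"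
  assumes M: "\<And>\<sigma> \<tau>. M \<sigma> \<tau> = (if (\<forall>i. i \<notin> Z \<longrightarrow> \<sigma> i = \<tau> i) then m (restrict \<sigma> Z) (restrict \<tau> Z) else 0)"
  shows "(\<Sum>\<alpha>\<in>UNIV. \<Sum>\<beta>\<in>UNIV. D \<alpha> \<beta> * M \<beta> \<alpha>) = (\<Sum>\<sigma>\<in>configs Z. \<Sum>\<tau>\<in>configs Z. ptrace Z D \<sigma> \<tau> * m \<tau> \<sigma>)"
proof -
  define P where "P = {p :: ('s \<Rightarrow> 'q) \<times> ('s \<Rightarrow> 'q). \<forall>i. i \<notin> Z \<longrightarrow> fst p i = snd p i}"
  define g where "g p = D (fst p) (snd p) * M (snd p) (fst p)" for p
  define f where "f x = (merge Z (fst x) (snd (snd x)), merge Z (fst (snd x)) (snd (snd x)))"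
    for x :: "('s \<Rightarrow> 'q) \<times> ('s \<Rightarrow> 'q) \<times> ('s \<Rightarrow> 'q)"
  define f' where "f' p = (restrict (fst p) Z, restrict (snd p) Z, restrict (fst p) (- Z))"
    for p :: "('s \<Rightarrow> 'q) \<times> ('s \<Rightarrow> 'q)"
  define C where "C = (configs Z :: ('s \<Rightarrow> 'q) set) \<times> (configs Z :: ('s \<Rightarrow> 'q) set) \<times> (configs (- Z) :: ('s \<Rightarrow> 'q) set)"
  have "(\<Sum>\<alpha>\<in>UNIV. \<Sum>\<beta>\<in>UNIV. D \<alpha> \<beta> * M \<beta> \<alpha>) = (\<Sum>p\<in>UNIV. g p)"
    unfolding g_def by (simp add: sum.cartesian_product UNIV_Times_UNIV[symmetric] case_prod_beta del: UNIV_Times_UNIV)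
  also have "\<dots> = (\<Sum>p\<in>P. g p)"
    by (rule sum.mono_neutral_right) (auto simp: P_def g_def M)
  also have "\<dots> = (\<Sum>x\<in>C. g (f x))"
  proof -
    have "bij_betw f C P"
    proof (rule bij_betw_byWitness[where f' = f'])
      show "\<forall>a\<in>C. f' (f a) = a"
        unfolding C_def f_def f'_def by (auto simp: restrict_merge restrict_merge2)
      show "\<forall>a'\<in>P. f (f' a') = a'"
        unfolding P_def f_def f'_def
      proof (intro ballI)
        fix p :: "('s \<Rightarrow> 'q) \<times> ('s \<Rightarrow> 'q)" assume "p \<in> {p. \<forall>i. i \<notin> Z \<longrightarrow> fst p i = snd p i}"
        then have h: "\<And>i. i \<notin> Z \<Longrightarrow> fst p i = snd p i" by simp
        have 1: "merge Z (restrict (fst p) Z) (restrict (fst p) (- Z)) = fst p"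
          by (rule merge_restrict) simp
        have 2: "merge Z (restrict (snd p) Z) (restrict (fst p) (- Z)) = snd p"
          by (rule merge_restrict) (simp add: h)
        show "(merge Z (fst (restrict (fst p) Z, restrict (snd p) Z, restrict (fst p) (- Z))) (snd (snd (restrict (fst p) Z, restrict (snd p) Z, restrict (fst p) (- Z)))),
          merge Z (fst (snd (restrict (fst p) Z, restrict (snd p) Z, restrict (fst p) (- Z)))) (snd (snd (restrict (fst p) Z, restrict (snd p) Z, restrict (fst p) (- Z))))) = p"
          using 1 2 by simp
      qed
      show "f ` C \<subseteq> P" unfolding C_def f_def P_def merge_def by auto
      show "f' ` P \<subseteq> C" unfolding C_def f'_def by (auto simp: restrict_configs)
    qed
    then show ?thesis by (rule sum.reindex_bij_betw[symmetric])
  qed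
  also have "\<dots> = (\<Sum>x\<in>C. D (merge Z (fst x) (snd (snd x))) (merge Z (fst (snd x)) (snd (snd x))) * m (fst (snd x)) (fst x))"
  proof (rule sum.cong[OF refl])
    fix x assume "x \<in> C"
    then have x: "fst x \<in> configs Z" "fst (snd x) \<in> configs Z" unfolding C_def by auto
    have "M (merge Z (fst (snd x)) (snd (snd x))) (merge Z (fst x) (snd (snd x))) = m (fst (snd x)) (fst x)"
      unfolding M using x by (simp add: restrict_merge) (simp add: merge_def)
    then show "g (f x) = D (merge Z (fst x) (snd (snd x))) (merge Z (fst (snd x)) (snd (snd x))) * m (fst (snd x)) (fst x)"
      unfolding g_def f_def by simp
  qed
  also have "\<dots> = (\<Sum>\<sigma>\<in>configs Z. \<Sum>\<tau>\<in>configs Z. \<Sum>\<omega>\<in>configs (- Z). D (merge Z \<sigma> \<omega>) (merge Z \<tau> \<omega>) * m \<tau> \<sigma>)"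
    unfolding C_def by (simp add: sum.cartesian_product case_prod_beta)
  also have "\<dots> = (\<Sum>\<sigma>\<in>configs Z. \<Sum>\<tau>\<in>configs Z. ptrace Z D \<sigma> \<tau> * m \<tau> \<sigma>)"
    unfolding ptrace_def by (simp add: sum_distrib_right)
  finally show ?thesis .
qed

lemma ptrace_herm:
  assumes "hermitian_on UNIV D"
  shows "hermitian_on (configs Z) (ptrace Z D)"
  unfolding hermitian_on_def ptrace_def
proof (intro ballI)
  fix \<sigma> \<tau> :: "'a \<Rightarrow> 'b"
  have "\<And>\<omega>. D (merge Z \<sigma> \<omega>) (merge Z \<tau> \<omega>) = cnj (D (merge Z \<tau> \<omega>) (merge Z \<sigma> \<omega>))"
    using assms unfolding hermitian_on_def by blast
  then show "(\<Sum>\<omega>\<in>configs (- Z). D (merge Z \<sigma> \<omega>) (merge Z \<tau> \<omega>)) = cnj (\<Sum>\<omega>\<in>configs (- Z). D (merge Z \<tau> \<omega>) (merge Z \<sigma> \<omega>))"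
    by simp
qed


lemma local_quad:
  fixes M :: "('s::finite \<Rightarrow> 'q::finite) \<Rightarrow> ('s \<Rightarrow> 'q) \<Rightarrow> complex"
  assumes M: "\<And>\<sigma> \<tau>. M \<sigma> \<tau> = (if (\<forall>i. i \<notin> Z \<longrightarrow> \<sigma> i = \<tau> i) then m (restrict \<sigma> Z) (restrict \<tau> Z) else 0)"
  shows "cmod (ip (configs Z) e (mapply (configs Z) m e)) \<le> opnorm UNIV M * Re (ip (configs Z) e e)"
proof -
  define \<theta> :: "'s \<Rightarrow> 'q" where "\<theta> = undefined"
  define T where "T = {\<alpha> :: 's \<Rightarrow> 'q. \<forall>i. i \<notin> Z \<longrightarrow> \<alpha> i = \<theta> i}"
  have bij: "bij_betw (\<lambda>\<sigma>. merge Z \<sigma> \<theta>) (configs Z) T"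
  proof (rule bij_betw_byWitness[where f' = "\<lambda>\<alpha>. restrict \<alpha> Z"])
    show "\<forall>a\<in>configs Z. restrict (merge Z a \<theta>) Z = a" by (simp add: restrict_merge)
    show "\<forall>a'\<in>T. merge Z (restrict a' Z) \<theta> = a'" unfolding T_def by (auto intro: merge_restrict)
    show "(\<lambda>\<sigma>. merge Z \<sigma> \<theta>) ` configs Z \<subseteq> T" unfolding T_def merge_def by auto
    show "(\<lambda>\<alpha>. restrict \<alpha> Z) ` T \<subseteq> configs Z" by (auto simp: restrict_configs)
  qed
  have reidx: "(\<Sum>\<alpha>\<in>T. h \<alpha>) = (\<Sum>\<sigma>\<in>configs Z. h (merge Z \<sigma> \<theta>))" for h :: "('s \<Rightarrow> 'q) \<Rightarrow> complex"
    using sum.reindex_bij_betw[OF bij, of h] by simp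
  have inT: "\<sigma> \<in> configs Z \<Longrightarrow> merge Z \<sigma> \<theta> \<in> T" for \<sigma> unfolding T_def merge_def by auto
  define w where "w \<alpha> = (if \<alpha> \<in> T then e (restrict \<alpha> Z) else 0)" for \<alpha>
  have ipw: "ip UNIV w v = (\<Sum>\<sigma>\<in>configs Z. cnj (e \<sigma>) * v (merge Z \<sigma> \<theta>))" for v
  proof -
    have "ip UNIV w v = (\<Sum>\<alpha>\<in>T. cnj (w \<alpha>) * v \<alpha>)"
      unfolding ip_def by (rule sum.mono_neutral_right) (auto simp: w_def)
    also have "\<dots> = (\<Sum>\<sigma>\<in>configs Z. cnj (w (merge Z \<sigma> \<theta>)) * v (merge Z \<sigma> \<theta>))" by (rule reidx)
    also have "\<dots> = (\<Sum>\<sigma>\<in>configs Z. cnj (e \<sigma>) * v (merge Z \<sigma> \<theta>))"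
      by (intro sum.cong refl) (simp add: w_def inT restrict_merge)
    finally show ?thesis .
  qed
  have ww: "ip UNIV w w = ip (configs Z) e e"
  proof -
    have "ip UNIV w w = (\<Sum>\<sigma>\<in>configs Z. cnj (e \<sigma>) * w (merge Z \<sigma> \<theta>))" by (rule ipw)
    also have "\<dots> = ip (configs Z) e e"
      unfolding ip_def by (intro sum.cong refl) (simp add: w_def inT restrict_merge)
    finally show ?thesis .
  qed
  have Mw: "mapply UNIV M w (merge Z \<sigma> \<theta>) = mapply (configs Z) m e \<sigma>" if \<sigma>: "\<sigma> \<in> configs Z" for \<sigma>
  proof -
    have "mapply UNIV M w (merge Z \<sigma> \<theta>) = (\<Sum>\<beta>\<in>T. M (merge Z \<sigma> \<theta>) \<beta> * w \<beta>)"
      unfolding mapply_def by (rule sum.mono_neutral_right) (auto simp: w_def)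
    also have "\<dots> = (\<Sum>\<tau>\<in>configs Z. M (merge Z \<sigma> \<theta>) (merge Z \<tau> \<theta>) * w (merge Z \<tau> \<theta>))" by (rule reidx)
    also have "\<dots> = (\<Sum>\<tau>\<in>configs Z. m \<sigma> \<tau> * e \<tau>)"
    proof (intro sum.cong refl)
      fix \<tau> :: "'s \<Rightarrow> 'q" assume \<tau>: "\<tau> \<in> configs Z"
      have "M (merge Z \<sigma> \<theta>) (merge Z \<tau> \<theta>) = m \<sigma> \<tau>"
        unfolding M using \<sigma> \<tau> by (simp add: restrict_merge) (simp add: merge_def)
      then show "M (merge Z \<sigma> \<theta>) (merge Z \<tau> \<theta>) * w (merge Z \<tau> \<theta>) = m \<sigma> \<tau> * e \<tau>"
        using \<tau> by (simp add: w_def inT restrict_merge)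
    qed
    finally show ?thesis unfolding mapply_def .
  qed
  have "ip UNIV w (mapply UNIV M w) = (\<Sum>\<sigma>\<in>configs Z. cnj (e \<sigma>) * mapply UNIV M w (merge Z \<sigma> \<theta>))"
    by (rule ipw)
  also have "\<dots> = ip (configs Z) e (mapply (configs Z) m e)"
    unfolding ip_def by (intro sum.cong refl) (simp add: Mw)
  finally show ?thesis using quad_opnorm[of UNIV w M] ww by simp
qed

lemma trace_spec_eq:
  assumes sp: "spec S X E ev"
  shows "(\<Sum>a\<in>S. \<Sum>b\<in>S. X a b * M b a) = (\<Sum>e\<in>E. of_real (ev e) * ip S e (mapply S M e))"
proof -
  have E: "onb S E" and X: "\<forall>a\<in>S. \<forall>b\<in>S. X a b = (\<Sum>e\<in>E. of_real (ev e) * e a * cnj (e b))"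
    using sp unfolding spec_def by auto
  have "(\<Sum>a\<in>S. \<Sum>b\<in>S. X a b * M b a) = (\<Sum>a\<in>S. \<Sum>b\<in>S. \<Sum>e\<in>E. of_real (ev e) * (e a * cnj (e b) * M b a))"
    by (intro sum.cong refl) (use X in \<open>auto simp: sum_distrib_right sum_distrib_left mult_ac\<close>)
  also have "\<dots> = (\<Sum>e\<in>E. of_real (ev e) * (\<Sum>a\<in>S. \<Sum>b\<in>S. e a * cnj (e b) * M b a))"
    by (simp add: sum_distrib_left sum.swap[of _ S E])
  also have "\<dots> = (\<Sum>e\<in>E. of_real (ev e) * ip S e (mapply S M e))"
    by (simp add: ip_mapply_expand)
  finally show ?thesis .
qed

lemma energy_lower:
  fixes H \<rho> :: "'i::finite \<Rightarrow> 'i \<Rightarrow> complex" and \<psi> :: "'i \<Rightarrow> complex"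
  assumes hermH: "hermitian_on UNIV H" and psd: "psd_on UNIV \<rho>" and tr: "mtrace UNIV \<rho> = 1"
    and nrm: "ip UNIV \<psi> \<psi> = 1" and gs: "mapply UNIV H \<psi> = (\<lambda>_. 0)"
    and spectrum: "\<And>\<mu> v. v \<noteq> (\<lambda>_. 0) \<Longrightarrow> mapply UNIV H v = (\<lambda>a. \<mu> * v a) \<Longrightarrow>
                      lmin \<le> Re \<mu> \<or> (\<exists>c. v = (\<lambda>a. c * \<psi> a))"
    and lpos: "lmin > 0"
  shows "lmin * (1 - Re (ip UNIV \<psi> (mapply UNIV \<rho> \<psi>))) \<le> Re (\<Sum>a\<in>UNIV. \<Sum>b\<in>UNIV. \<rho> a b * H b a)"
proof -
  define F where "F = Re (ip UNIV \<psi> (mapply UNIV \<rho> \<psi>))"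
  obtain E ev where sp: "spec UNIV H E ev" using spectral_spec[OF hermH] by blast
  have E: "onb UNIV E" and Hd: "\<forall>a\<in>UNIV. \<forall>b\<in>UNIV. H a b = (\<Sum>e\<in>E. of_real (ev e) * e a * cnj (e b))"
    using sp unfolding spec_def by auto
  have fin: "finite E" using onb_fin[OF E] .
  define r where "r g = Re (ip UNIV g (mapply UNIV \<rho> g))" for g
  have r0: "r g \<ge> 0" for g unfolding r_def by (rule psd_ip[OF psd])
  have trH: "(\<Sum>a\<in>UNIV. \<Sum>b\<in>UNIV. \<rho> a b * H b a) = (\<Sum>e\<in>E. of_real (ev e) * ip UNIV e (mapply UNIV \<rho> e))"
  proof -
    have "(\<Sum>a\<in>UNIV. \<Sum>b\<in>UNIV. \<rho> a b * H b a) = (\<Sum>b\<in>UNIV. \<Sum>a\<in>UNIV. H b a * \<rho> a b)"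
      by (subst sum.swap) (simp add: mult.commute)
    also have "\<dots> = (\<Sum>e\<in>E. of_real (ev e) * ip UNIV e (mapply UNIV \<rho> e))"
      by (rule trace_spec_eq[OF sp])
    finally show ?thesis .
  qed
  have spI: "spec UNIV (\<lambda>a b. if a = b then 1 else 0) E (\<lambda>_. 1)"
    unfolding spec_def using E onb_compl[OF E] by simp
  have sumr: "(\<Sum>g\<in>E. r g) = 1"
  proof -
    have "(\<Sum>a\<in>UNIV. \<Sum>b\<in>UNIV. (if a = b then 1 else 0) * \<rho> b a) = (\<Sum>e\<in>E. of_real 1 * ip UNIV e (mapply UNIV \<rho> e))"
      by (rule trace_spec_eq[OF spI])
    moreover have "(\<Sum>a\<in>UNIV. \<Sum>b\<in>UNIV. (if a = b then 1 else 0) * \<rho> b a) = mtrace UNIV \<rho>"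
      unfolding mtrace_def
    proof (intro sum.cong refl)
      fix a :: 'i
      have "(\<Sum>b\<in>UNIV. (if a = b then 1 else 0) * \<rho> b a) = (\<Sum>b\<in>UNIV. if a = b then \<rho> b a else 0)"
        by (rule sum.cong) auto
      then show "(\<Sum>b\<in>UNIV. (if a = b then 1 else 0) * \<rho> b a) = \<rho> a a" by simp
    qed
    ultimately have "(\<Sum>e\<in>E. ip UNIV e (mapply UNIV \<rho> e)) = 1" using tr by simp
    then show ?thesis unfolding r_def by (metis Re_sum one_complex.sel(1))
  qed
  have eig: "mapply UNIV H g = (\<lambda>a. of_real (ev g) * g a)" if g: "g \<in> E" for g
  proof
    fix a :: 'i
    show "mapply UNIV H g a = of_real (ev g) * g a"
      by (rule mapply_decomp_basis[OF E _ Hd g]) simp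
  qed
  have gnz: "g \<noteq> (\<lambda>_. 0)" if g: "g \<in> E" for g
  proof
    assume "g = (\<lambda>_. 0)" then have "ip UNIV g g = 0" by (simp add: ip_def)
    then show False using onb_orth[OF E g g] by simp
  qed
  define G0 where "G0 = {g\<in>E. \<exists>c. g = (\<lambda>a. c * \<psi> a)}"
  have G0_prop: "ev g = 0 \<and> r g = F" if g: "g \<in> G0" for g
  proof -
    obtain c where c: "g = (\<lambda>a. c * \<psi> a)" and gE: "g \<in> E" using g unfolding G0_def by blast
    have "ip UNIV g g = cnj c * c" unfolding c by (simp add: ip_scale_left ip_scale_right nrm)
    then have cc: "cnj c * c = 1" using onb_orth[OF E gE gE] by simp
    have "mapply UNIV H g = (\<lambda>a. c * mapply UNIV H \<psi> a)" unfolding c by (rule mapply_scale)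
    then have "mapply UNIV H g = (\<lambda>_. 0)" using gs by simp
    then have "(\<lambda>a. of_real (ev g) * g a) = (\<lambda>_. 0)" using eig[OF gE] by simp
    moreover obtain a where "g a \<noteq> 0" using gnz[OF gE] by auto
    ultimately have "ev g = 0" by (metis mult_eq_0_iff of_real_eq_0_iff)
    moreover have "r g = F"
      unfolding r_def F_def c mapply_scale by (simp add: ip_scale_left ip_scale_right mult.assoc[symmetric] cc)
    ultimately show ?thesis by simp
  qed
  have lowg: "ev g * r g \<ge> lmin * r g - (if g \<in> G0 then lmin * r g else 0)" if g: "g \<in> E" for g
  proof (cases "g \<in> G0")
    case True then show ?thesis using G0_prop by simp
  next
    case False
    then have "lmin \<le> ev g"
      using spectrum[OF gnz[OF g] eig[OF g]] g unfolding G0_def by auto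
    then show ?thesis using False r0[of g] by (simp add: mult_right_mono)
  qed
  have cardG0: "card G0 \<le> 1"
  proof (rule ccontr)
    assume "\<not> card G0 \<le> 1"
    then obtain g1 g2 where g: "g1 \<in> G0" "g2 \<in> G0" "g1 \<noteq> g2"
      by (metis One_nat_def card.infinite card_le_Suc0_iff_eq not_less_eq_eq zero_le)
    obtain c1 where c1: "g1 = (\<lambda>a. c1 * \<psi> a)" using g unfolding G0_def by blast
    obtain c2 where c2: "g2 = (\<lambda>a. c2 * \<psi> a)" using g unfolding G0_def by blast
    have E1: "g1 \<in> E" and E2: "g2 \<in> E" using g unfolding G0_def by auto
    have "ip UNIV g1 g1 = cnj c1 * c1" unfolding c1 by (simp add: ip_scale_left ip_scale_right nrm)
    then have "c1 \<noteq> 0" using onb_orth[OF E E1 E1] by auto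
    have "ip UNIV g2 g2 = cnj c2 * c2" unfolding c2 by (simp add: ip_scale_left ip_scale_right nrm)
    then have "c2 \<noteq> 0" using onb_orth[OF E E2 E2] by auto
    have "ip UNIV g1 g2 = cnj c1 * c2" unfolding c1 c2 by (simp add: ip_scale_left ip_scale_right nrm)
    then show False using onb_orth[OF E E1 E2] g(3) \<open>c1 \<noteq> 0\<close> \<open>c2 \<noteq> 0\<close> by simp
  qed
  have F0: "F \<ge> 0" unfolding F_def by (rule psd_ip[OF psd])
  have finG0: "finite G0" using fin unfolding G0_def by simp
  have sumG0: "(\<Sum>g\<in>G0. r g) \<le> F"
  proof -
    have "(\<Sum>g\<in>G0. r g) = of_nat (card G0) * F" using G0_prop by simp
    also have "\<dots> \<le> 1 * F" using cardG0 F0 by (intro mult_right_mono) auto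
    finally show ?thesis by simp
  qed
  have G0E: "G0 \<subseteq> E" unfolding G0_def by auto
  have "Re (\<Sum>a\<in>UNIV. \<Sum>b\<in>UNIV. \<rho> a b * H b a) = (\<Sum>g\<in>E. ev g * r g)"
    unfolding trH r_def Re_sum by simp
  also have "\<dots> \<ge> (\<Sum>g\<in>E. lmin * r g - (if g \<in> G0 then lmin * r g else 0))"
    by (intro sum_mono lowg)
  finally have "(\<Sum>g\<in>E. lmin * r g - (if g \<in> G0 then lmin * r g else 0)) \<le> Re (\<Sum>a\<in>UNIV. \<Sum>b\<in>UNIV. \<rho> a b * H b a)" .
  moreover have "(\<Sum>g\<in>E. lmin * r g - (if g \<in> G0 then lmin * r g else 0)) = lmin - lmin * (\<Sum>g\<in>G0. r g)"
  proof -
    have "(\<Sum>g\<in>E. (if g \<in> G0 then lmin * r g else 0)) = (\<Sum>g\<in>G0. lmin * r g)"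
      using fin G0E by (simp add: sum.If_cases Int_absorb1)
    then show ?thesis using sumr by (simp add: sum_subtractf sum_distrib_left[symmetric])
  qed
  moreover have "lmin * (\<Sum>g\<in>G0. r g) \<le> lmin * F" using sumG0 lpos by simp
  ultimately show ?thesis unfolding F_def[symmetric] by (simp add: algebra_simps)
qed

lemma term_bound:
  fixes hZ D :: "('s::finite \<Rightarrow> 'q::finite) \<Rightarrow> ('s \<Rightarrow> 'q) \<Rightarrow> complex"
  assumes supp: "supported_on Z hZ" and hermD: "hermitian_on UNIV D"
    and tn: "trace_norm (configs Z) (ptrace Z D) \<le> \<epsilon>"
  shows "cmod (\<Sum>a\<in>UNIV. \<Sum>b\<in>UNIV. D a b * hZ b a) \<le> opnorm UNIV hZ * \<epsilon>"
proof -
  obtain m where M: "\<And>\<sigma> \<tau>. hZ \<sigma> \<tau> = (if (\<forall>i. i \<notin> Z \<longrightarrow> \<sigma> i = \<tau> i) then m (restrict \<sigma> Z) (restrict \<tau> Z) else 0)"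
    using supp unfolding supported_on_def by blast
  have eq: "(\<Sum>a\<in>UNIV. \<Sum>b\<in>UNIV. D a b * hZ b a) = (\<Sum>\<sigma>\<in>configs Z. \<Sum>\<tau>\<in>configs Z. ptrace Z D \<sigma> \<tau> * m \<tau> \<sigma>)"
    by (rule local_trace[OF M])
  have hX: "hermitian_on (configs Z) (ptrace Z D)" by (rule ptrace_herm[OF hermD])
  obtain E ev where sp: "spec (configs Z) (ptrace Z D) E ev" using spectral_spec[OF hX] by blast
  have E: "onb (configs Z) E" using sp unfolding spec_def by blast
  have K: "cmod (ip (configs Z) e (mapply (configs Z) m e)) \<le> opnorm UNIV hZ" if e: "e \<in> E" for e
    using local_quad[OF M, of e] onb_orth[OF E e e] by simp
  have "cmod (\<Sum>\<sigma>\<in>configs Z. \<Sum>\<tau>\<in>configs Z. ptrace Z D \<sigma> \<tau> * m \<tau> \<sigma>) \<le> opnorm UNIV hZ * (\<Sum>e\<in>E. \<bar>ev e\<bar>)"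
    by (rule trace_bound[OF sp K])
  also have "(\<Sum>e\<in>E. \<bar>ev e\<bar>) = trace_norm (configs Z) (ptrace Z D)"
    by (rule trace_norm_spec[OF hX sp, symmetric])
  also have "opnorm UNIV hZ * \<dots> \<le> opnorm UNIV hZ * \<epsilon>"
    by (intro mult_left_mono tn opnorm_nonneg) simp
  finally show ?thesis unfolding eq .
qed

lemma empty_term:
  fixes hZ D :: "('s::finite \<Rightarrow> 'q::finite) \<Rightarrow> ('s \<Rightarrow> 'q) \<Rightarrow> complex"
  assumes supp: "supported_on {} hZ" and trD: "(\<Sum>a\<in>UNIV. D a a) = 0"
  shows "(\<Sum>a\<in>UNIV. \<Sum>b\<in>UNIV. D a b * hZ b a) = 0"
proof -
  obtain m where M: "\<And>\<sigma> \<tau>. hZ \<sigma> \<tau> = (if (\<forall>i. i \<notin> {} \<longrightarrow> \<sigma> i = \<tau> i) then m (restrict \<sigma> {}) (restrict \<tau> {}) else 0)"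
    using supp unfolding supported_on_def by blast
  define c where "c = m (\<lambda>_. undefined) (\<lambda>_. undefined)"
  have r: "restrict \<sigma> {} = (\<lambda>_. undefined)" for \<sigma> :: "'s \<Rightarrow> 'q" by (simp add: restrict_def)
  have h: "hZ b a = (if b = a then c else 0)" for a b unfolding M r c_def by (auto simp: fun_eq_iff)
  have "(\<Sum>a\<in>UNIV. \<Sum>b\<in>UNIV. D a b * hZ b a) = (\<Sum>a\<in>UNIV. \<Sum>b\<in>UNIV. if b = a then D a b * c else 0)"
    unfolding h by (intro sum.cong refl; simp)
  also have "\<dots> = (\<Sum>a\<in>UNIV. D a a) * c" by (simp add: sum_distrib_right)
  finally show ?thesis using trD by simp
qed

lemma count_sum:
  fixes f :: "'s::finite set \<Rightarrow> real"
  shows "(\<Sum>Z\<in>UNIV. real (card Z) * f Z) = (\<Sum>i\<in>UNIV. \<Sum>Z\<in>{Z. i \<in> Z}. f Z)"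
proof -
  have "(\<Sum>Z\<in>UNIV. real (card Z) * f Z) = (\<Sum>Z\<in>UNIV. \<Sum>i\<in>UNIV. if i \<in> Z then f Z else 0)"
  proof (intro sum.cong refl)
    fix Z :: "'s set"
    have "(\<Sum>i\<in>UNIV. if i \<in> Z then f Z else 0) = (\<Sum>i\<in>{i\<in>UNIV. i \<in> Z}. f Z)"
      by (rule sum.inter_filter[symmetric]) simp
    also have "\<dots> = real (card Z) * f Z" by simp
    finally show "real (card Z) * f Z = (\<Sum>i\<in>UNIV. if i \<in> Z then f Z else 0)" by simp
  qed
  also have "\<dots> = (\<Sum>i\<in>UNIV. \<Sum>Z\<in>UNIV. if i \<in> Z then f Z else 0)" by (rule sum.swap)
  also have "\<dots> = (\<Sum>i\<in>UNIV. \<Sum>Z\<in>{Z. i \<in> Z}. f Z)"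
  proof (rule sum.cong[OF refl])
    fix i :: 's
    show "(\<Sum>Z\<in>UNIV. if i \<in> Z then f Z else 0) = (\<Sum>Z\<in>{Z. i \<in> Z}. f Z)"
      using sum.inter_filter[of "UNIV :: 's set set" f "\<lambda>Z. i \<in> Z"] by simp
  qed
  finally show ?thesis .
qed

theorem lemma3:
  fixes h :: "'s::{finite,metric_space} set \<Rightarrow> (('s \<Rightarrow> 'q::finite) \<Rightarrow> ('s \<Rightarrow> 'q) \<Rightarrow> complex)"
    and \<Psi>0 :: "('s \<Rightarrow> 'q) \<Rightarrow> complex"
    and R J lmin :: real
  assumes local: "\<And>Z. supported_on Z (h Z) \<and> hermitian_on UNIV (h Z)"
    and range: "\<And>Z. diameter Z > R \<Longrightarrow> h Z = (\<lambda>_ _. 0)"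
    and strength: "\<And>i. (\<Sum>Z\<in>{Z. i \<in> Z}. opnorm UNIV (h Z)) \<le> J"
    and gs_norm: "vnorm UNIV \<Psi>0 = 1"
    and gs_energy: "mapply UNIV (hamiltonian h) \<Psi>0 = (\<lambda>_. 0)"
    and gap_pos: "lmin > 0"
    and spectrum: "\<And>\<mu> v. v \<noteq> (\<lambda>_. 0) \<Longrightarrow> mapply UNIV (hamiltonian h) v = (\<lambda>a. \<mu> * v a) \<Longrightarrow>
                      lmin \<le> Re \<mu> \<or> (\<exists>c. v = (\<lambda>a. c * \<Psi>0 a))"
  shows "unique_gs R (2 * sqrt (J * real CARD('s) / lmin)) \<Psi>0"
  unfolding unique_gs_def
proof (intro allI impI)
  fix \<epsilon> :: real and \<rho> :: "('s \<Rightarrow> 'q) \<Rightarrow> ('s \<Rightarrow> 'q) \<Rightarrow> complex"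
  assume hyp: "\<epsilon> \<ge> 0 \<and> density_matrix \<rho> \<and> (\<forall>A::'s set. diameter A \<le> R \<longrightarrow>
            trace_norm (configs A) (ptrace A (\<lambda>a b. \<rho> a b - projector \<Psi>0 a b)) \<le> \<epsilon>)"
  define D where "D = (\<lambda>a b. \<rho> a b - projector \<Psi>0 a b)"
  define H where "H = hamiltonian h"
  define V where "V = real CARD('s)"
  have eps: "\<epsilon> \<ge> 0" using hyp by blast
  have psd: "psd_on UNIV \<rho>" and tr: "mtrace UNIV \<rho> = 1" using hyp unfolding density_matrix_def by auto
  have loc: "\<And>A. diameter A \<le> R \<Longrightarrow> trace_norm (configs A) (ptrace A D) \<le> \<epsilon>"
    using hyp unfolding D_def by blast
  have nrm: "ip UNIV \<Psi>0 \<Psi>0 = 1"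
  proof -
    have "(\<Sum>a\<in>UNIV. (cmod (\<Psi>0 a))\<^sup>2) = 1" using gs_norm unfolding vnorm_def by simp
    then show ?thesis by (simp add: ip_self)
  qed
  have herm\<rho>: "hermitian_on UNIV \<rho>" using psd unfolding psd_on_def by blast
  have hermD: "hermitian_on UNIV D"
    unfolding hermitian_on_def
  proof (intro ballI)
    fix a b :: "'s \<Rightarrow> 'q"
    have "\<rho> a b = cnj (\<rho> b a)" using herm\<rho> unfolding hermitian_on_def by blast
    then show "D a b = cnj (D b a)" unfolding D_def projector_def by simp
  qed
  have hermH: "hermitian_on UNIV H"
    unfolding hermitian_on_def H_def hamiltonian_def
  proof (intro ballI)
    fix a b :: "'s \<Rightarrow> 'q"
    have "\<And>Z. h Z a b = cnj (h Z b a)" using local unfolding hermitian_on_def by blast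
    then show "(\<Sum>Z\<in>UNIV. h Z a b) = cnj (\<Sum>Z\<in>UNIV. h Z b a)" by simp
  qed
  define F where "F = Re (ip UNIV \<Psi>0 (mapply UNIV \<rho> \<Psi>0))"
  have fid: "trace_norm UNIV D \<le> 2 * sqrt (1 - F)"
    unfolding D_def F_def by (rule fidelity_bound[OF psd tr nrm])
  have low: "lmin * (1 - F) \<le> Re (\<Sum>a\<in>UNIV. \<Sum>b\<in>UNIV. \<rho> a b * H b a)"
    unfolding F_def
    by (rule energy_lower[OF hermH psd tr nrm gs_energy[folded H_def] spectrum[folded H_def] gap_pos])
  have trP: "(\<Sum>a\<in>UNIV. \<Sum>b\<in>UNIV. projector \<Psi>0 a b * H b a) = 0"
  proof -
    have "(\<Sum>a\<in>UNIV. \<Sum>b\<in>UNIV. projector \<Psi>0 a b * H b a) = (\<Sum>b\<in>UNIV. \<Sum>a\<in>UNIV. cnj (\<Psi>0 b) * (H b a * \<Psi>0 a))"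
      unfolding projector_def by (subst sum.swap) (simp add: mult_ac)
    also have "\<dots> = (\<Sum>b\<in>UNIV. cnj (\<Psi>0 b) * mapply UNIV H \<Psi>0 b)"
      unfolding mapply_def by (simp add: sum_distrib_left)
    also have "\<dots> = 0" using gs_energy unfolding H_def by simp
    finally show ?thesis .
  qed
  have trD0: "(\<Sum>a\<in>UNIV. D a a) = 0"
  proof -
    have "(\<Sum>a\<in>UNIV. D a a) = mtrace UNIV \<rho> - ip UNIV \<Psi>0 \<Psi>0"
      unfolding D_def projector_def mtrace_def ip_def by (simp add: sum_subtractf mult.commute)
    then show ?thesis using tr nrm by simp
  qed
  define T where "T Z = (\<Sum>a\<in>UNIV. \<Sum>b\<in>UNIV. D a b * h Z b a)" for Z
  have trDH: "(\<Sum>a\<in>UNIV. \<Sum>b\<in>UNIV. \<rho> a b * H b a) = (\<Sum>Z\<in>UNIV. T Z)"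
  proof -
    have "(\<Sum>a\<in>UNIV. \<Sum>b\<in>UNIV. \<rho> a b * H b a) = (\<Sum>a\<in>UNIV. \<Sum>b\<in>UNIV. D a b * H b a) + (\<Sum>a\<in>UNIV. \<Sum>b\<in>UNIV. projector \<Psi>0 a b * H b a)"
      unfolding D_def by (simp add: left_diff_distrib sum_subtractf)
    also have "\<dots> = (\<Sum>a\<in>UNIV. \<Sum>b\<in>UNIV. D a b * H b a)" using trP by simp
    also have "\<dots> = (\<Sum>a\<in>UNIV. \<Sum>b\<in>UNIV. \<Sum>Z\<in>UNIV. D a b * h Z b a)"
      unfolding H_def hamiltonian_def by (simp add: sum_distrib_left)
    also have "\<dots> = (\<Sum>a\<in>UNIV. \<Sum>Z\<in>UNIV. \<Sum>b\<in>UNIV. D a b * h Z b a)"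
      by (intro sum.cong refl) (rule sum.swap)
    also have "\<dots> = (\<Sum>Z\<in>UNIV. \<Sum>a\<in>UNIV. \<Sum>b\<in>UNIV. D a b * h Z b a)" by (rule sum.swap)
    finally show ?thesis unfolding T_def .
  qed
  have Tb: "cmod (T Z) \<le> real (card Z) * (opnorm UNIV (h Z) * \<epsilon>)" for Z
  proof (cases "Z = {}")
    case True
    have "supported_on {} (h {})" using local by blast
    from empty_term[where D = D, OF this trD0] have "T {} = 0" unfolding T_def .
    with True have "T Z = 0" by simp
    then show ?thesis using True by simp
  next
    case False
    have on0: "opnorm UNIV (h Z) * \<epsilon> \<ge> 0" using opnorm_nonneg[of "UNIV :: ('s \<Rightarrow> 'q) set"] eps by simp
    have c1: "real (card Z) \<ge> 1" using False by (simp add: Suc_le_eq card_gt_0_iff)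
    have "cmod (T Z) \<le> opnorm UNIV (h Z) * \<epsilon>"
    proof (cases "diameter Z > R")
      case True
      then have "T Z = 0" unfolding T_def using range by simp
      then show ?thesis using on0 by simp
    next
      case False
      then have "trace_norm (configs Z) (ptrace Z D) \<le> \<epsilon>" using loc by simp
      then show ?thesis unfolding T_def using term_bound local hermD by blast
    qed
    also have "\<dots> \<le> real (card Z) * (opnorm UNIV (h Z) * \<epsilon>)"
      using c1 on0 by (simp add: mult_le_cancel_right1)
    finally show ?thesis .
  qed
  have up: "Re (\<Sum>a\<in>UNIV. \<Sum>b\<in>UNIV. \<rho> a b * H b a) \<le> J * V * \<epsilon>"
  proof -
    have "Re (\<Sum>Z\<in>UNIV. T Z) \<le> cmod (\<Sum>Z\<in>UNIV. T Z)" by (rule complex_Re_le_cmod)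
    also have "\<dots> \<le> (\<Sum>Z\<in>UNIV. cmod (T Z))" by (rule norm_sum)
    also have "\<dots> \<le> (\<Sum>Z\<in>UNIV. real (card Z) * (opnorm UNIV (h Z) * \<epsilon>))" by (intro sum_mono Tb)
    also have "\<dots> = (\<Sum>i\<in>UNIV. \<Sum>Z\<in>{Z. i \<in> Z}. opnorm UNIV (h Z) * \<epsilon>)" by (rule count_sum)
    also have "\<dots> = (\<Sum>i\<in>UNIV. (\<Sum>Z\<in>{Z. i \<in> Z}. opnorm UNIV (h Z))) * \<epsilon>"
      by (simp add: sum_distrib_right)
    also have "\<dots> \<le> (\<Sum>i\<in>(UNIV::'s set). J) * \<epsilon>"
      by (intro mult_right_mono sum_mono strength eps)
    also have "\<dots> = J * V * \<epsilon>" unfolding V_def by (simp add: mult.commute)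
    finally show ?thesis using trDH by simp
  qed
  have "lmin * (1 - F) \<le> J * V * \<epsilon>" using low up by simp
  then have "1 - F \<le> J * V / lmin * \<epsilon>" using gap_pos by (simp add: field_simps)
  then have "sqrt (1 - F) \<le> sqrt (J * V / lmin * \<epsilon>)" by (rule real_sqrt_le_mono)
  also have "\<dots> = sqrt (J * V / lmin) * sqrt \<epsilon>" by (rule real_sqrt_mult)
  finally have "trace_norm UNIV D \<le> 2 * (sqrt (J * V / lmin) * sqrt \<epsilon>)" using fid by simp
  then show "trace_norm UNIV (\<lambda>a b. \<rho> a b - projector \<Psi>0 a b) \<le> 2 * sqrt (J * real CARD('s) / lmin) * sqrt \<epsilon>"
    unfolding D_def V_def by (simp add: mult.assoc)
qed

end
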